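(* Let $z$ be a local holomorphic coordinate near $Q$ with $z(Q)=0$ and metric $h(z,\bar z)dz\,d\bar z$, and expand the smooth function $\Gamma(z,\bar z):=-\frac{h_z}{h}(z,\bar z)$ at $0$ as $$\Gamma=c_0+c_1\bar z+c_2z+c_3z^2+c_4\bar z^2+c_5z\bar z+O(|z|^3).$$ Let $\gamma_1,\gamma_2,\gamma_3\in\mathbb C$ solve $2\gamma_1+c_0=0$, $c_2+2\gamma_1c_0+6\gamma_2=0$, $12\gamma_3+c_3+2\gamma_1c_2+3\gamma_2c_0=0$, and set $w=z+\gamma_1z^2+\gamma_2z^3+\gamma_3z^4$. If $z(t,x)$ solves $i\partial_tz+\partial_x^2z=\Gamma(z,\bar z)(\partial_xz)^2$ with $|z|$ small, then $w(t,x)$ solves $$i\partial_tw+\partial_x^2w=\big(c_1\bar w+\nu_2|w|^2+\nu_3\bar w^2\big)(\partial_xw)^2+O(|w|^3)(\partial_xw)^2,$$ with $\nu_2=c_5-2\gamma_1c_1$, $\nu_3=c_4-c_1\bar\gamma_1$, where $c_1\in\mathbb R$ and $\nu_2=2\overline{\nu_3}$. Here $O(|w|^3)$ denotes a smooth function of $(w,\bar w)$ vanishing to third order at $0$.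
   Context: Subscripts denote Wirtinger derivatives. The equation $i\partial_tz+\partial_x^2z=-\frac{h_z}{h}(\partial_xz)^2$ is the 1D Schrödinger map flow $\partial_tu=J\nabla_x\partial_xu$ written in the holomorphic coordinate $z$ (with $J$ acting as multiplication by $i$). *)

theory Defs
  imports "HOL-Analysis.Analysis"
begin

fun Ck_on :: "nat \<Rightarrow> 'a::real_normed_vector set \<Rightarrow> ('a \<Rightarrow> 'b::real_normed_vector) \<Rightarrow> bool" where
  "Ck_on 0 S f = continuous_on S f"
| "Ck_on (Suc k) S f =
     (continuous_on S f \<and> f differentiable_on S \<and>
      (\<forall>v. Ck_on k S (\<lambda>x. frechet_derivative f (at x) v)))"

definition smooth_on :: "'a::real_normed_vector set \<Rightarrow> ('a \<Rightarrow> 'b::real_normed_vector) \<Rightarrow> bool" where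
  "smooth_on S f \<longleftrightarrow> (\<forall>k. Ck_on k S f)"

definition wirt_z :: "(complex \<Rightarrow> complex) \<Rightarrow> complex \<Rightarrow> complex" where
  "wirt_z f z = (frechet_derivative f (at z) 1 - \<i> * frechet_derivative f (at z) \<i>) / 2"

end

theory Submission
  imports Defs "HOL-Complex_Analysis.Conformal_Mappings"
begin


lemma Ck_on_cont: "Ck_on k S f \<Longrightarrow> continuous_on S f"
  by (cases k) auto

lemma Ck_on_Suc_imp: "Ck_on (Suc k) S f \<Longrightarrow> Ck_on k S f"
proof (induction k arbitrary: f)
  case 0 thus ?case by simp
next
  case (Suc k) thus ?case by auto
qed

lemma Ck_on_subset: "Ck_on k S f \<Longrightarrow> T \<subseteq> S \<Longrightarrow> Ck_on k T f"
proof (induction k arbitrary: f)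
  case 0 thus ?case by (auto intro: continuous_on_subset)
next
  case (Suc k) thus ?case by (auto intro: continuous_on_subset differentiable_on_subset)
qed

lemma Ck_on_cong:
  assumes "open S" "\<And>x. x \<in> S \<Longrightarrow> f x = g x" "Ck_on k S f"
  shows "Ck_on k S g"
  using assms(2,3)
proof (induction k arbitrary: f g)
  case 0 thus ?case using continuous_on_cong by force
next
  case (Suc k)
  have c: "continuous_on S g" using Suc continuous_on_cong by force
  have fd: "f differentiable at x" if "x \<in> S" for x
    using Suc.prems(2) that assms(1) differentiable_on_eq_differentiable_at by auto
  have "g differentiable at x" if xS: "x \<in> S" for x
  proof -
    obtain D where "(f has_derivative D) (at x)" using fd[OF xS] differentiable_def by blast
    then have "(g has_derivative D) (at x)"
      using has_derivative_transform_within_open[OF _ assms(1) xS] Suc.prems(1) by blast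
    then show ?thesis using differentiableI by blast
  qed
  then have d: "g differentiable_on S"
    using assms(1) differentiable_on_eq_differentiable_at by blast
  have "Ck_on k S (\<lambda>x. frechet_derivative g (at x) v)" for v
  proof (rule Suc.IH[of "\<lambda>x. frechet_derivative f (at x) v"])
    show "Ck_on k S (\<lambda>x. frechet_derivative f (at x) v)" using Suc.prems by auto
    fix x assume "x \<in> S"
    then show "frechet_derivative f (at x) v = frechet_derivative g (at x) v"
      using frechet_derivative_transform_within_open[OF fd assms(1) _ Suc.prems(1)] by auto
  qed
  then show ?case using c d by simp
qed

lemma Ck_on_SucI:
  assumes "open S" "\<And>x. x \<in> S \<Longrightarrow> (f has_derivative F' x) (at x)"
    "\<And>v. Ck_on k S (\<lambda>x. F' x v)"
  shows "Ck_on (Suc k) S f"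
proof -
  have c: "continuous_on S f"
    using assms(2) has_derivative_continuous continuous_at_imp_continuous_on by blast
  have d: "f differentiable_on S"
    using assms(1,2) differentiable_on_eq_differentiable_at differentiableI by blast
  have "Ck_on k S (\<lambda>x. frechet_derivative f (at x) v)" for v
    by (rule Ck_on_cong[OF assms(1) _ assms(3)[of v]])
       (metis assms(2) frechet_derivative_at)
  then show ?thesis using c d by simp
qed

lemma Ck_on_SucD:
  assumes "Ck_on (Suc k) S f" "open S" "x \<in> S"
  shows "(f has_derivative frechet_derivative f (at x)) (at x)"
proof -
  have "f differentiable at x"
    using assms differentiable_on_eq_differentiable_at by auto
  then show ?thesis using frechet_derivative_works by blast
qed

lemma Ck_on_SucD2:
  assumes "Ck_on (Suc k) S f"
  shows "Ck_on k S (\<lambda>x. frechet_derivative f (at x) v)"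
  using assms by auto

lemma Ck_const: "Ck_on k S (\<lambda>x. c)"
  by (induction k arbitrary: c) auto

lemma Ck_linear:
  assumes "open S" "bounded_linear L"
  shows "Ck_on k S (\<lambda>x. L x)"
proof (cases k)
  case 0 thus ?thesis using assms linear_continuous_on by auto
next
  case (Suc j)
  show ?thesis unfolding Suc
    by (rule Ck_on_SucI[OF assms(1), where F'="\<lambda>x. L"])
       (auto simp: assms(2) bounded_linear_imp_has_derivative Ck_const)
qed

lemma Ck_bl:
  assumes "open S" "bounded_linear L" "Ck_on k S f"
  shows "Ck_on k S (\<lambda>x. L (f x))"
  using assms(3)
proof (induction k arbitrary: f)
  case 0 thus ?case
    using assms(2) linear_continuous_on continuous_on_compose[of S f L]
    by (auto simp: o_def)
next
  case (Suc k)
  show ?case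
  proof (rule Ck_on_SucI[OF assms(1), where F'="\<lambda>x v. L (frechet_derivative f (at x) v)"])
    fix x assume "x \<in> S"
    then show "((\<lambda>x. L (f x)) has_derivative (\<lambda>v. L (frechet_derivative f (at x) v))) (at x)"
      using Ck_on_SucD[OF Suc.prems assms(1)] bounded_linear.has_derivative[OF assms(2)] by blast
  next
    fix v show "Ck_on k S (\<lambda>x. L (frechet_derivative f (at x) v))"
      using Suc.IH Suc.prems by auto
  qed
qed

lemma Ck_add:
  assumes "open S" "Ck_on k S f" "Ck_on k S g"
  shows "Ck_on k S (\<lambda>x. f x + g x)"
  using assms(2,3)
proof (induction k arbitrary: f g)
  case 0 thus ?case by (auto intro: continuous_on_add)
next
  case (Suc k)
  show ?case
  proof (rule Ck_on_SucI[OF assms(1), where F'="\<lambda>x v. frechet_derivative f (at x) v + frechet_derivative g (at x) v"])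
    fix x assume "x \<in> S"
    then show "((\<lambda>x. f x + g x) has_derivative (\<lambda>v. frechet_derivative f (at x) v + frechet_derivative g (at x) v)) (at x)"
      using Ck_on_SucD[OF Suc.prems(1) assms(1)] Ck_on_SucD[OF Suc.prems(2) assms(1)]
      by (intro has_derivative_add) auto
  next
    fix v show "Ck_on k S (\<lambda>x. frechet_derivative f (at x) v + frechet_derivative g (at x) v)"
      using Suc.IH Suc.prems by auto
  qed
qed

lemma Ck_bilinear:
  assumes "open S" "bounded_bilinear pr" "Ck_on k S f" "Ck_on k S g"
  shows "Ck_on k S (\<lambda>x. pr (f x) (g x))"
  using assms(3,4)
proof (induction k arbitrary: f g)
  case 0 thus ?case using bounded_bilinear.continuous_on[OF assms(2)] by auto
next
  case (Suc k)
  show ?case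
  proof (rule Ck_on_SucI[OF assms(1), where F'="\<lambda>x v. pr (f x) (frechet_derivative g (at x) v) + pr (frechet_derivative f (at x) v) (g x)"])
    fix x assume "x \<in> S"
    then show "((\<lambda>x. pr (f x) (g x)) has_derivative (\<lambda>v. pr (f x) (frechet_derivative g (at x) v) + pr (frechet_derivative f (at x) v) (g x))) (at x)"
      using Ck_on_SucD[OF Suc.prems(1) assms(1)] Ck_on_SucD[OF Suc.prems(2) assms(1)]
        bounded_bilinear.FDERIV[OF assms(2)] by blast
  next
    fix v show "Ck_on k S (\<lambda>x. pr (f x) (frechet_derivative g (at x) v) + pr (frechet_derivative f (at x) v) (g x))"
    proof (rule Ck_add[OF assms(1)])
      have "Ck_on k S f" "Ck_on k S g" using Suc.prems Ck_on_Suc_imp by blast+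
      then show "Ck_on k S (\<lambda>x. pr (f x) (frechet_derivative g (at x) v))"
        "Ck_on k S (\<lambda>x. pr (frechet_derivative f (at x) v) (g x))"
        using Suc.IH Suc.prems by auto
    qed
  qed
qed

lemma Ck_mult:
  fixes f g :: "'a::real_normed_vector \<Rightarrow> 'b::real_normed_algebra"
  assumes "open S" "Ck_on k S f" "Ck_on k S g"
  shows "Ck_on k S (\<lambda>x. f x * g x)"
  using Ck_bilinear[OF assms(1) bounded_bilinear_mult assms(2,3)] .

lemma Ck_scaleR:
  assumes "open S" "Ck_on k S f" "Ck_on k S g"
  shows "Ck_on k S (\<lambda>x. f x *\<^sub>R g x)"
  using Ck_bilinear[OF assms(1) bounded_bilinear_scaleR assms(2,3)] .

lemma Ck_minus:
  assumes "open S" "Ck_on k S f"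
  shows "Ck_on k S (\<lambda>x. - f x)"
  using Ck_bl[OF assms(1) bounded_linear_minus[OF bounded_linear_ident] assms(2)] .

lemma Ck_diff:
  assumes "open S" "Ck_on k S f" "Ck_on k S g"
  shows "Ck_on k S (\<lambda>x. f x - g x)"
  using Ck_add[OF assms(1) assms(2) Ck_minus[OF assms(1,3)]] by simp

lemma Ck_inverse:
  fixes f :: "'a::real_normed_vector \<Rightarrow> 'b::real_normed_field"
  assumes "open S" "Ck_on k S f" "\<And>x. x \<in> S \<Longrightarrow> f x \<noteq> 0"
  shows "Ck_on k S (\<lambda>x. inverse (f x))"
  using assms(2)
proof (induction k)
  case 0 thus ?case using assms(3) by (auto intro!: continuous_on_inverse)
next
  case (Suc k)
  have fk: "Ck_on k S f" using Suc.prems Ck_on_Suc_imp by blast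
  show ?case
  proof (rule Ck_on_SucI[OF assms(1), where F'="\<lambda>x v. - (inverse (f x) * frechet_derivative f (at x) v * inverse (f x))"])
    fix x assume "x \<in> S"
    then show "((\<lambda>x. inverse (f x)) has_derivative (\<lambda>v. - (inverse (f x) * frechet_derivative f (at x) v * inverse (f x)))) (at x)"
      using Ck_on_SucD[OF Suc.prems assms(1)] assms(3) by (intro Deriv.has_derivative_inverse) auto
  next
    fix v show "Ck_on k S (\<lambda>x. - (inverse (f x) * frechet_derivative f (at x) v * inverse (f x)))"
      using Suc.IH[OF fk] Suc.prems
      by (intro Ck_minus Ck_mult assms(1)) auto
  qed
qed

lemma linear_complex_decomp:
  fixes L :: "complex \<Rightarrow> 'b::real_normed_vector"
  assumes "linear L"
  shows "L u = Re u *\<^sub>R L 1 + Im u *\<^sub>R L \<i>"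
proof -
  have "u = Re u *\<^sub>R 1 + Im u *\<^sub>R \<i>" by (simp add: complex_eq_iff)
  then have "L u = L (Re u *\<^sub>R 1 + Im u *\<^sub>R \<i>)" by simp
  also have "\<dots> = Re u *\<^sub>R L 1 + Im u *\<^sub>R L \<i>"
    using assms by (simp add: linear_add linear_scale)
  finally show ?thesis .
qed

lemma Ck_compose:
  fixes f :: "complex \<Rightarrow> 'b::real_normed_vector" and g :: "'a::real_normed_vector \<Rightarrow> complex"
  assumes "open S" "open T" "g ` S \<subseteq> T" "Ck_on k T f" "Ck_on k S g"
  shows "Ck_on k S (\<lambda>x. f (g x))"
  using assms(4,5)
proof (induction k arbitrary: f)
  case 0 show ?case unfolding Ck_on.simps by (rule continuous_on_compose2[OF _ _ assms(3)]) (use 0 in simp_all)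
next
  case (Suc k)
  let ?F = "\<lambda>x v. Re (frechet_derivative g (at x) v) *\<^sub>R frechet_derivative f (at (g x)) 1
       + Im (frechet_derivative g (at x) v) *\<^sub>R frechet_derivative f (at (g x)) \<i>"
  show ?case
  proof (rule Ck_on_SucI[OF assms(1), where F'="?F"])
    fix x assume xS: "x \<in> S"
    have dg: "(g has_derivative frechet_derivative g (at x)) (at x)"
      using Ck_on_SucD[OF Suc.prems(2) assms(1) xS] .
    have df: "(f has_derivative frechet_derivative f (at (g x))) (at (g x))"
      using Ck_on_SucD[OF Suc.prems(1) assms(2)] xS assms(3) by auto
    have lin: "linear (frechet_derivative f (at (g x)))"
      using df has_derivative_linear by blast
    have "((\<lambda>x. f (g x)) has_derivative (\<lambda>v. frechet_derivative f (at (g x)) (frechet_derivative g (at x) v))) (at x)"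
      using diff_chain_at[OF dg df] by (simp add: o_def)
    then show "((\<lambda>x. f (g x)) has_derivative ?F x) (at x)"
      by (rule has_derivative_eq_rhs) (rule ext, rule linear_complex_decomp[OF lin])
  next
    fix v
    have fk: "Ck_on k T f" and gk: "Ck_on k S g" using Suc.prems Ck_on_Suc_imp by blast+
    have a: "Ck_on k S (\<lambda>x. frechet_derivative f (at (g x)) 1)"
      using Suc.IH[OF _ gk, of "\<lambda>y. frechet_derivative f (at y) 1"] Suc.prems by auto
    have b: "Ck_on k S (\<lambda>x. frechet_derivative f (at (g x)) \<i>)"
      using Suc.IH[OF _ gk, of "\<lambda>y. frechet_derivative f (at y) \<i>"] Suc.prems by auto
    have c: "Ck_on k S (\<lambda>x. Re (frechet_derivative g (at x) v))"
      using Suc.prems by (intro Ck_bl[OF assms(1) bounded_linear_Re]) auto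
    have d: "Ck_on k S (\<lambda>x. Im (frechet_derivative g (at x) v))"
      using Suc.prems by (intro Ck_bl[OF assms(1) bounded_linear_Im]) auto
    show "Ck_on k S (\<lambda>x. ?F x v)"
      using a b c d by (intro Ck_add Ck_scaleR assms(1))
  qed
qed



lemma smooth_onD: "smooth_on S f \<Longrightarrow> Ck_on k S f"
  unfolding smooth_on_def by blast

lemma frechet_of_real:
  fixes h :: "'a::real_normed_vector \<Rightarrow> real"
  assumes "h differentiable at z"
  shows "frechet_derivative (\<lambda>u. complex_of_real (h u)) (at z) v = of_real (frechet_derivative h (at z) v)"
proof -
  have "((\<lambda>u. complex_of_real (h u)) has_derivative (\<lambda>v. of_real (frechet_derivative h (at z) v))) (at z)"
    using assms unfolding frechet_derivative_works by (rule has_derivative_of_real)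
  then show ?thesis by (rule fun_cong[OF frechet_derivative_at[symmetric]])
qed

lemma Re_aux: "(H::real) > 0 \<Longrightarrow> Re (- (complex_of_real a - \<i> * complex_of_real b) * complex_of_real (inverse (2*H)) * u) = - (Re u * a + Im u * b) / (2*H)"
  by (simp add: field_simps)

lemma Gam_aux: "- ((x::complex)/2) / y = - x * inverse (2*y)"
  by (simp add: field_simps)

definition Gam :: "(complex \<Rightarrow> real) \<Rightarrow> complex \<Rightarrow> complex" where
  "Gam h z = - (of_real (frechet_derivative h (at z) 1) - \<i> * of_real (frechet_derivative h (at z) \<i>))
      * inverse (2 * of_real (h z))"

lemma Gamma_eq_Gam:
  assumes "h differentiable at z"
  shows "- wirt_z (\<lambda>u. complex_of_real (h u)) z / complex_of_real (h z) = Gam h z"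
  unfolding wirt_z_def Gam_def frechet_of_real[OF assms] by (rule Gam_aux)

lemma Ck_Gam:
  assumes "open S" "\<And>z. z \<in> S \<Longrightarrow> h z > 0" "Ck_on (Suc k) S h"
  shows "Ck_on k S (Gam h)"
proof -
  have d1: "Ck_on k S (\<lambda>z. complex_of_real (frechet_derivative h (at z) v))" for v
    using assms(3) by (intro Ck_bl[OF assms(1) bounded_linear_of_real]) auto
  have hk: "Ck_on k S (\<lambda>z. 2 * complex_of_real (h z))"
    using Ck_on_Suc_imp[OF assms(3)] by (intro Ck_mult[OF assms(1)] Ck_const Ck_bl[OF assms(1) bounded_linear_of_real])
  have "Ck_on k S (\<lambda>z. - (of_real (frechet_derivative h (at z) 1) - \<i> * of_real (frechet_derivative h (at z) \<i>))
      * inverse (2 * complex_of_real (h z)))"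
  proof (rule Ck_mult[OF assms(1)])
    show "Ck_on k S (\<lambda>z. inverse (2 * complex_of_real (h z)))"
      by (rule Ck_inverse[OF assms(1) hk]) (use assms(2) in force)
    show "Ck_on k S (\<lambda>z. - (of_real (frechet_derivative h (at z) 1) - \<i> * of_real (frechet_derivative h (at z) \<i>)))"
      using d1 by (intro Ck_mult Ck_minus Ck_diff Ck_const assms(1)) auto
  qed
  then show ?thesis unfolding Gam_def[abs_def] .
qed

lemma Re_Gam:
  fixes h :: "complex \<Rightarrow> real"
  assumes "h differentiable at z" "h z > 0"
  shows "Re (Gam h z * u) = - frechet_derivative h (at z) u / (2 * h z)"
proof -
  have lin: "linear (frechet_derivative h (at z))"
    using assms(1) linear_frechet_derivative by blast
  have dec: "frechet_derivative h (at z) u = Re u * frechet_derivative h (at z) 1 + Im u * frechet_derivative h (at z) \<i>"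
    unfolding real_scaleR_def[symmetric] by (rule linear_complex_decomp[OF lin])
  have eq: "Gam h z * u = - (complex_of_real (frechet_derivative h (at z) 1) - \<i> * complex_of_real (frechet_derivative h (at z) \<i>)) * complex_of_real (inverse (2 * h z)) * u"
    unfolding Gam_def by simp
  have "Re (Gam h z * u) = Re (- (complex_of_real (frechet_derivative h (at z) 1) - \<i> * complex_of_real (frechet_derivative h (at z) \<i>)) * complex_of_real (inverse (2 * h z)) * u)"
    by (simp only: eq)
  also have "\<dots> = - (Re u * frechet_derivative h (at z) 1 + Im u * frechet_derivative h (at z) \<i>) / (2 * h z)"
    by (rule Re_aux[OF assms(2)])
  also have "\<dots> = - frechet_derivative h (at z) u / (2 * h z)"
    by (simp only: dec)
  finally show ?thesis .
qed



definition phiP :: "complex \<Rightarrow> complex \<Rightarrow> complex \<Rightarrow> complex \<Rightarrow> complex" where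
  "phiP g1 g2 g3 z = z + g1 * z^2 + g2 * z^3 + g3 * z^4"
definition dphi :: "complex \<Rightarrow> complex \<Rightarrow> complex \<Rightarrow> complex \<Rightarrow> complex" where
  "dphi g1 g2 g3 z = 1 + 2 * g1 * z + 3 * g2 * z^2 + 4 * g3 * z^3"
definition ddphi :: "complex \<Rightarrow> complex \<Rightarrow> complex \<Rightarrow> complex \<Rightarrow> complex" where
  "ddphi g1 g2 g3 z = 2 * g1 + 6 * g2 * z + 12 * g3 * z^2"

lemma phiP_deriv: "(phiP g1 g2 g3 has_field_derivative dphi g1 g2 g3 z) (at z)"
  unfolding phiP_def[abs_def] dphi_def
  by (auto intro!: derivative_eq_intros simp: algebra_simps)

lemma dphi_deriv: "(dphi g1 g2 g3 has_field_derivative ddphi g1 g2 g3 z) (at z)"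
  unfolding dphi_def[abs_def] ddphi_def
  by (auto intro!: derivative_eq_intros simp: algebra_simps)

lemma phiP_0[simp]: "phiP g1 g2 g3 0 = 0" by (simp add: phiP_def)

lemma phiP_diff: "phiP g1 g2 g3 a - phiP g1 g2 g3 b =
   (a - b) * (1 + (g1 * (a + b) + g2 * (a^2 + a*b + b^2) + g3 * (a^3 + a^2*b + a*b^2 + b^3)))"
  unfolding phiP_def by algebra

lemma dphi_alt: "dphi g1 g2 g3 z = 1 + (g1 * (z + z) + g2 * (z^2 + z*z + z^2) + g3 * (z^3 + z^2*z + z*z^2 + z^3))"
  unfolding dphi_def by algebra

lemma bracket_bound:
  fixes a b g1 g2 g3 :: complex
  assumes "cmod a \<le> r" "cmod b \<le> r" "r \<le> 1"
  shows "cmod (g1 * (a + b) + g2 * (a^2 + a*b + b^2) + g3 * (a^3 + a^2*b + a*b^2 + b^3))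
     \<le> (2 * cmod g1 + 3 * cmod g2 + 4 * cmod g3) * r"
proof -
  have r0: "0 \<le> r" using assms(1) norm_ge_zero order_trans by blast
  have m: "cmod (a^i * b^j) \<le> r" if "i + j \<ge> 1" for i j
  proof -
    have "cmod (a^i * b^j) = cmod a ^ i * cmod b ^ j" by (simp add: norm_mult norm_power)
    also have "\<dots> \<le> r ^ i * r ^ j"
      using r0 by (intro mult_mono power_mono assms) auto
    also have "\<dots> = r ^ (i + j)" by (simp add: power_add)
    also have "\<dots> \<le> r ^ 1" using that assms(3) r0 by (intro power_decreasing) auto
    finally show ?thesis by simp
  qed
  have s1: "cmod (a + b) \<le> 2 * r" using m[of 1 0] m[of 0 1] norm_triangle_ineq[of a b] by simp
  have s2: "cmod (a^2 + a*b + b^2) \<le> 3 * r"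
    using m[of 2 0] m[of 1 1] m[of 0 2] norm_triangle_ineq[of "a^2 + a*b" "b^2"] norm_triangle_ineq[of "a^2" "a*b"]
    by simp
  have s3: "cmod (a^3 + a^2*b + a*b^2 + b^3) \<le> 4 * r"
    using m[of 3 0] m[of 2 1] m[of 1 2] m[of 0 3] norm_triangle_ineq[of "a^3 + a^2*b + a*b^2" "b^3"]
      norm_triangle_ineq[of "a^3 + a^2*b" "a*b^2"] norm_triangle_ineq[of "a^3" "a^2*b"]
    by simp
  have "cmod (g1 * (a + b) + g2 * (a^2 + a*b + b^2) + g3 * (a^3 + a^2*b + a*b^2 + b^3))
     \<le> cmod g1 * cmod (a + b) + cmod g2 * cmod (a^2 + a*b + b^2) + cmod g3 * cmod (a^3 + a^2*b + a*b^2 + b^3)"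
    using norm_triangle_ineq[of "g1 * (a + b) + g2 * (a^2 + a*b + b^2)" "g3 * (a^3 + a^2*b + a*b^2 + b^3)"]
      norm_triangle_ineq[of "g1 * (a + b)" "g2 * (a^2 + a*b + b^2)"]
    unfolding norm_mult by linarith
  also have "\<dots> \<le> cmod g1 * (2 * r) + cmod g2 * (3 * r) + cmod g3 * (4 * r)"
    by (intro add_mono mult_left_mono s1 s2 s3) auto
  finally show ?thesis by (simp add: algebra_simps)
qed

lemma one_plus_lower: "cmod (B::complex) \<le> 1/2 \<Longrightarrow> cmod (1 + B) \<ge> 1/2"
  using norm_diff_ineq[of 1 B] by simp

lemma phiP_lower:
  fixes g1 g2 g3 a b :: complex
  assumes "cmod a \<le> r" "cmod b \<le> r" "r \<le> 1" "(2 * cmod g1 + 3 * cmod g2 + 4 * cmod g3) * r \<le> 1/2"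
  shows "cmod (phiP g1 g2 g3 a - phiP g1 g2 g3 b) \<ge> cmod (a - b) / 2"
proof -
  let ?B = "g1 * (a + b) + g2 * (a^2 + a*b + b^2) + g3 * (a^3 + a^2*b + a*b^2 + b^3)"
  have "cmod ?B \<le> 1/2" using bracket_bound[OF assms(1-3), of g1 g2 g3] assms(4) by linarith
  then have "cmod (1 + ?B) \<ge> 1/2" by (rule one_plus_lower)
  then have "cmod (a - b) * (1/2) \<le> cmod (a - b) * cmod (1 + ?B)"
    by (intro mult_left_mono) auto
  then show ?thesis unfolding phiP_diff norm_mult by simp
qed

lemma dphi_lower:
  fixes g1 g2 g3 z :: complex
  assumes "cmod z \<le> r" "r \<le> 1" "(2 * cmod g1 + 3 * cmod g2 + 4 * cmod g3) * r \<le> 1/2"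
  shows "cmod (dphi g1 g2 g3 z) \<ge> 1/2"
proof -
  let ?B = "g1 * (z + z) + g2 * (z^2 + z*z + z^2) + g3 * (z^3 + z^2*z + z*z^2 + z^3)"
  have "cmod ?B \<le> 1/2" using bracket_bound[OF assms(1,1,2), of g1 g2 g3] assms(3) by linarith
  then have "cmod (1 + ?B) \<ge> 1/2" by (rule one_plus_lower)
  then show ?thesis unfolding dphi_alt .
qed

lemma phiP_holo: "phiP g1 g2 g3 holomorphic_on S"
  unfolding phiP_def[abs_def] by (intro holomorphic_intros)

lemma phiP_inverse:
  fixes g1 g2 g3 :: complex and e :: real
  assumes "e > 0"
  obtains r0 \<rho> \<psi> where "0 < r0" "r0 \<le> e" "r0 \<le> 1" "0 < \<rho>"
    "\<And>z. cmod z \<le> r0 \<Longrightarrow> cmod (dphi g1 g2 g3 z) \<ge> 1/2"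
    "\<And>z. cmod z \<le> r0 \<Longrightarrow> cmod (phiP g1 g2 g3 z) \<ge> cmod z / 2"
    "\<And>w. w \<in> ball 0 \<rho> \<Longrightarrow> \<psi> w \<in> ball 0 r0 \<and> phiP g1 g2 g3 (\<psi> w) = w"
    "\<And>z. z \<in> ball 0 r0 \<Longrightarrow> \<psi> (phiP g1 g2 g3 z) = z"
    "\<And>w. w \<in> ball 0 \<rho> \<Longrightarrow> (\<psi> has_field_derivative inverse (dphi g1 g2 g3 (\<psi> w))) (at w)"
    "continuous_on (ball 0 \<rho>) \<psi>"
proof -
  define K where "K = 2 * cmod g1 + 3 * cmod g2 + 4 * cmod g3"
  have K0: "K \<ge> 0" unfolding K_def by simp
  define r0 where "r0 = min e (1 / (2 * K + 2))"
  have r0pos: "0 < r0" unfolding r0_def using assms K0 by simp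
  have r0e: "r0 \<le> e" and r0b: "r0 \<le> 1 / (2 * K + 2)" unfolding r0_def by auto
  have r01: "r0 \<le> 1"
    using r0b K0 by (smt (verit) divide_le_eq_1)
  have Kr: "K * r0 \<le> 1/2"
  proof -
    have "K * r0 \<le> K * (1 / (2 * K + 2))" using r0b K0 by (intro mult_left_mono) auto
    also have "\<dots> \<le> 1/2" using K0 by (simp add: field_simps)
    finally show ?thesis .
  qed
  let ?f = "phiP g1 g2 g3"
  let ?D = "ball (0::complex) r0"
  have dl: "cmod (dphi g1 g2 g3 z) \<ge> 1/2" if "cmod z \<le> r0" for z
    using dphi_lower[OF that r01] Kr unfolding K_def by blast
  have pl: "cmod (?f a - ?f b) \<ge> cmod (a - b) / 2" if "cmod a \<le> r0" "cmod b \<le> r0" for a b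
    using phiP_lower[OF that r01] Kr unfolding K_def by blast
  have pl0: "cmod (?f z) \<ge> cmod z / 2" if "cmod z \<le> r0" for z
    using pl[OF that, of 0] r0pos by simp
  have inj: "inj_on ?f ?D"
  proof (rule inj_onI)
    fix a b assume "a \<in> ?D" "b \<in> ?D" "?f a = ?f b"
    then show "a = b" using pl[of a b] by (auto simp: dist_norm)
  qed
  obtain \<psi> where psih: "\<psi> holomorphic_on (?f ` ?D)"
    and psid: "\<And>z. z \<in> ?D \<Longrightarrow> deriv ?f z * deriv \<psi> (?f z) = 1"
    and psii: "\<And>z. z \<in> ?D \<Longrightarrow> \<psi> (?f z) = z"
    using holomorphic_has_inverse[OF phiP_holo open_ball inj] by blast
  have op: "open (?f ` ?D)" by (rule open_mapping_thm3[OF phiP_holo open_ball inj])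
  have "0 \<in> ?f ` ?D" using r0pos by (auto intro!: image_eqI[of 0 _ 0])
  then obtain \<rho> where rho: "\<rho> > 0" "ball 0 \<rho> \<subseteq> ?f ` ?D"
    using op open_contains_ball by blast
  show ?thesis
  proof (rule that[OF r0pos r0e r01 rho(1), of \<psi>])
    show "cmod (dphi g1 g2 g3 z) \<ge> 1/2" if "cmod z \<le> r0" for z using dl that .
    show "cmod (?f z) \<ge> cmod z / 2" if "cmod z \<le> r0" for z using pl0 that .
    show "\<psi> w \<in> ?D \<and> ?f (\<psi> w) = w" if "w \<in> ball 0 \<rho>" for w
      using rho(2) that psii by auto
    show "\<psi> (?f z) = z" if "z \<in> ?D" for z using psii that .
    show "(\<psi> has_field_derivative inverse (dphi g1 g2 g3 (\<psi> w))) (at w)" if w: "w \<in> ball 0 \<rho>" for w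
    proof -
      obtain z where z: "z \<in> ?D" "w = ?f z" using rho(2) w by auto
      have "\<psi> field_differentiable (at w)"
        using holomorphic_on_imp_differentiable_at[OF psih op] z by auto
      then have d: "(\<psi> has_field_derivative deriv \<psi> w) (at w)"
        using DERIV_deriv_iff_field_differentiable by blast
      have "deriv ?f z = dphi g1 g2 g3 z" using DERIV_imp_deriv[OF phiP_deriv] .
      then have "dphi g1 g2 g3 z * deriv \<psi> w = 1" using psid[OF z(1)] z(2) by simp
      then have "deriv \<psi> w = inverse (dphi g1 g2 g3 z)"
        by (metis inverse_unique mult.commute)
      moreover have "\<psi> w = z" using psii z by simp
      ultimately show ?thesis using d by simp
    qed
    show "continuous_on (ball 0 \<rho>) \<psi>"
      using holomorphic_on_imp_continuous_on[OF psih] rho(2) continuous_on_subset by blast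
  qed
qed



lemma Ck_id: "open S \<Longrightarrow> Ck_on k S (\<lambda>z. z)"
  using Ck_linear[OF _ bounded_linear_ident] by blast

lemma Ck_cnj: "open S \<Longrightarrow> Ck_on k S (\<lambda>z. cnj z)"
  using Ck_linear[OF _ bounded_linear_cnj] by blast

lemma Ck_power:
  fixes f :: "'a::real_normed_vector \<Rightarrow> 'b::real_normed_algebra_1"
  assumes "open S" "Ck_on k S f"
  shows "Ck_on k S (\<lambda>x. f x ^ n)"
proof (induction n)
  case 0 thus ?case by (simp add: Ck_const)
next
  case (Suc n)
  then show ?case using Ck_mult[OF assms(1) assms(2) Suc] by simp
qed

lemma Ck_dphi: "open S \<Longrightarrow> Ck_on k S (dphi g1 g2 g3)"
  unfolding dphi_def[abs_def]
  by (intro Ck_add Ck_mult Ck_const Ck_power Ck_id)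

lemma Ck_ddphi: "open S \<Longrightarrow> Ck_on k S (ddphi g1 g2 g3)"
  unfolding ddphi_def[abs_def]
  by (intro Ck_add Ck_mult Ck_const Ck_power Ck_id)

lemma Ck_psi:
  assumes "open B" "\<And>w. w \<in> B \<Longrightarrow> (\<psi> has_field_derivative inverse (dphi g1 g2 g3 (\<psi> w))) (at w)"
    "\<And>w. w \<in> B \<Longrightarrow> dphi g1 g2 g3 (\<psi> w) \<noteq> 0"
  shows "Ck_on k B \<psi>"
proof (induction k)
  case 0
  have "continuous (at w) \<psi>" if "w \<in> B" for w
    using assms(2)[OF that] DERIV_isCont by blast
  then show ?case by (simp add: continuous_at_imp_continuous_on)
next
  case (Suc k)
  show ?case
  proof (rule Ck_on_SucI[OF assms(1), where F'="\<lambda>w v. inverse (dphi g1 g2 g3 (\<psi> w)) * v"])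
    fix w assume "w \<in> B"
    then show "(\<psi> has_derivative (\<lambda>v. inverse (dphi g1 g2 g3 (\<psi> w)) * v)) (at w)"
      using assms(2) has_field_derivative_def by blast
  next
    fix v
    have "Ck_on k B (\<lambda>w. dphi g1 g2 g3 (\<psi> w))"
      by (rule Ck_compose[OF assms(1) open_UNIV _ Ck_dphi[OF open_UNIV] Suc]) auto
    then have "Ck_on k B (\<lambda>w. inverse (dphi g1 g2 g3 (\<psi> w)))"
      using assms(3) by (intro Ck_inverse[OF assms(1)])
    then show "Ck_on k B (\<lambda>w. inverse (dphi g1 g2 g3 (\<psi> w)) * v)"
      by (intro Ck_mult[OF assms(1)] Ck_const)
  qed
qed

definition Efun :: "(complex \<Rightarrow> real) \<Rightarrow> complex \<Rightarrow> complex \<Rightarrow> complex \<Rightarrow> complex \<Rightarrow> complex" where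
  "Efun h g1 g2 g3 z = (Gam h z + ddphi g1 g2 g3 z * inverse (dphi g1 g2 g3 z)) * inverse (dphi g1 g2 g3 z)"

lemma smooth_R:
  fixes h :: "complex \<Rightarrow> real"
  assumes "open S" "\<And>z. z \<in> S \<Longrightarrow> h z > 0" "smooth_on S h"
    "ball 0 r0 \<subseteq> S" "\<And>z. z \<in> ball 0 r0 \<Longrightarrow> dphi g1 g2 g3 z \<noteq> 0"
    "\<And>w. w \<in> ball 0 \<rho> \<Longrightarrow> \<psi> w \<in> ball 0 r0"
    "\<And>w. w \<in> ball 0 \<rho> \<Longrightarrow> (\<psi> has_field_derivative inverse (dphi g1 g2 g3 (\<psi> w))) (at w)"
  shows "smooth_on (ball 0 \<rho>) (\<lambda>w. Efun h g1 g2 g3 (\<psi> w)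
      - (c1 * cnj w + n2 * complex_of_real ((cmod w)^2) + n3 * (cnj w)^2))"
  unfolding smooth_on_def
proof
  fix k
  have psi: "Ck_on k (ball 0 \<rho>) \<psi>"
    using assms(5-7) by (intro Ck_psi[OF open_ball]) auto
  have G: "Ck_on k (ball 0 r0) (Gam h)"
    using Ck_Gam[OF assms(1,2) smooth_onD[OF assms(3)]] assms(4) Ck_on_subset by blast
  have inv: "Ck_on k (ball 0 r0) (\<lambda>z. inverse (dphi g1 g2 g3 z))"
    using assms(5) by (intro Ck_inverse Ck_dphi open_ball)
  have E: "Ck_on k (ball 0 r0) (Efun h g1 g2 g3)"
    unfolding Efun_def[abs_def]
    using G inv by (intro Ck_mult Ck_add Ck_ddphi open_ball)
  have EC: "Ck_on k (ball 0 \<rho>) (\<lambda>w. Efun h g1 g2 g3 (\<psi> w))"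
    using assms(6) by (intro Ck_compose[OF open_ball open_ball _ E psi]) auto
  have P: "Ck_on k (ball 0 \<rho>) (\<lambda>w. c1 * cnj w + n2 * (w * cnj w) + n3 * (cnj w)^2)"
    by (intro Ck_add Ck_mult Ck_const Ck_power Ck_id Ck_cnj open_ball)
  have "Ck_on k (ball 0 \<rho>) (\<lambda>w. Efun h g1 g2 g3 (\<psi> w) - (c1 * cnj w + n2 * (w * cnj w) + n3 * (cnj w)^2))"
    by (rule Ck_diff[OF open_ball EC P])
  then show "Ck_on k (ball 0 \<rho>) (\<lambda>w. Efun h g1 g2 g3 (\<psi> w)
      - (c1 * cnj w + n2 * complex_of_real ((cmod w)^2) + n3 * (cnj w)^2))"
    unfolding complex_norm_square .
qed



lemma N_ident:
  fixes z zb g1 g2 g3 gb1 c0 c1 c2 c3 c4 c5 n2 n3 :: complex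
  assumes "2*g1 + c0 = 0" "c2 + 2*g1*c0 + 6*g2 = 0" "12*g3 + c3 + 2*g1*c2 + 3*g2*c0 = 0"
    "n2 = c5 - 2*g1*c1" "n3 = c4 - c1*gb1"
  shows "(c0 + c1*zb + c2*z + c3*z^2 + c4*zb^2 + c5*z*zb) * (1 + 2*g1*z + 3*g2*z^2 + 4*g3*z^3)
     + (2*g1 + 6*g2*z + 12*g3*z^2)
     - (c1*(zb + gb1*zb^2) + n2*(z*zb) + n3*zb^2) * (1 + 2*g1*z + 3*g2*z^2 + 4*g3*z^3)^2
   = z^3 * (- 18*g2^2 - 32*g1*g3 + 48*g1^2*g2 - 16*g1^4 - 4*zb*g3*c1 - 3*zb*g2*c5 - 4*zb*g1^2*c5 + 8*zb*g1^3*c1 - 4*zb^2*g3*c4 - 12*zb^2*g1*g2*c4 - 60*z*g2*g3 + 54*z*g1*g2^2 + 16*z*g1^2*g3 - 24*z*g1^3*g2 - 4*z*zb*g3*c5 - 9*z*zb*g2^2*c1 - 12*z*zb*g1*g2*c5 + 24*z*zb*g1^2*g2*c1 - 9*z*zb^2*g2^2*c4 - 16*z*zb^2*g1*g3*c4 - 48*z^2*g3^2 + 72*z^2*g1*g2*g3 - 32*z^2*g1^3*g3 - 24*z^2*zb*g2*g3*c1 - 9*z^2*zb*g2^2*c5 - 16*z^2*zb*g1*g3*c5 + 18*z^2*zb*g1*g2^2*c1 + 32*z^2*zb*g1^2*g3*c1 - 24*z^2*zb^2*g2*g3*c4 - 16*z^3*zb*g3^2*c1 - 24*z^3*zb*g2*g3*c5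 + 48*z^3*zb*g1*g2*g3*c1 - 16*z^3*zb^2*g3^2*c4 - 16*z^4*zb*g3^2*c5 + 32*z^4*zb*g1*g3^2*c1) + z^2*zb*(- 3*g2*c1 - 2*g1*c5 + 4*g1^2*c1 - 3*zb*g2*c4 - 4*zb*g1^2*c4) + z*zb^2*(- 2*g1*c4)"
proof -
  have c3: "c3 = -12*g3 - 2*g1*c2 - 3*g2*c0" using assms(3) by (simp add: algebra_simps eq_neg_iff_add_eq_0)
  have c2: "c2 = - 2*g1*c0 - 6*g2" using assms(2) by (simp add: algebra_simps eq_neg_iff_add_eq_0)
  have c0: "c0 = -2*g1" using assms(1) by (simp add: algebra_simps eq_neg_iff_add_eq_0)
  show ?thesis unfolding c3 unfolding c2 unfolding c0 assms(4,5) by algebra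
qed

lemma P_ident:
  fixes z zb g1 g2 g3 gb1 gb2 gb3 c1 n2 n3 :: complex
  shows "c1*(zb + gb1*zb^2 + gb2*zb^3 + gb3*zb^4)
     + n2*((z + g1*z^2 + g2*z^3 + g3*z^4)*(zb + gb1*zb^2 + gb2*zb^3 + gb3*zb^4))
     + n3*(zb + gb1*zb^2 + gb2*zb^3 + gb3*zb^4)^2
     - (c1*(zb + gb1*zb^2) + n2*(z*zb) + n3*zb^2)
   = z^2*zb*(n2*(g1 + g2*z + g3*z^2) + n2*zb*(g1 + g2*z + g3*z^2)*(gb1 + gb2*zb + gb3*zb^2))
     + z*zb^2*(n2*(gb1 + gb2*zb + gb3*zb^2))
     + zb^3*(c1*(gb2 + gb3*zb) + n3*(2*(gb1 + gb2*zb + gb3*zb^2) + zb*(gb1 + gb2*zb + gb3*zb^2)^2))"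
  by algebra

lemma cont_bounded:
  fixes f :: "complex \<Rightarrow> complex"
  assumes "continuous_on (cball 0 r) f"
  shows "\<exists>M. \<forall>z. cmod z \<le> r \<longrightarrow> cmod (f z) \<le> M"
proof -
  have "compact (f ` cball 0 r)" by (rule compact_continuous_image[OF assms compact_cball])
  then obtain M where "\<forall>y \<in> f ` cball 0 r. norm y \<le> M"
    using compact_imp_bounded bounded_iff by blast
  then have "\<forall>z. cmod z \<le> r \<longrightarrow> cmod (f z) \<le> M" by (simp add: mem_cball_0)
  then show ?thesis by blast
qed

lemma cubic_bound:
  fixes A B C D :: "complex \<Rightarrow> complex"
  assumes "continuous_on (cball 0 r) A" "continuous_on (cball 0 r) B"
    "continuous_on (cball 0 r) C" "continuous_on (cball 0 r) D"
  shows "\<exists>M. \<forall>z. cmod z \<le> r \<longrightarrow>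
    cmod (z^3 * A z + z^2 * cnj z * B z + z * (cnj z)^2 * C z + (cnj z)^3 * D z) \<le> M * cmod z ^ 3"
proof -
  obtain MA where MA: "\<forall>z. cmod z \<le> r \<longrightarrow> cmod (A z) \<le> MA" using cont_bounded[OF assms(1)] by blast
  obtain MB where MB: "\<forall>z. cmod z \<le> r \<longrightarrow> cmod (B z) \<le> MB" using cont_bounded[OF assms(2)] by blast
  obtain MC where MC: "\<forall>z. cmod z \<le> r \<longrightarrow> cmod (C z) \<le> MC" using cont_bounded[OF assms(3)] by blast
  obtain MD where MD: "\<forall>z. cmod z \<le> r \<longrightarrow> cmod (D z) \<le> MD" using cont_bounded[OF assms(4)] by blast
  show ?thesis
  proof (intro exI allI impI)
    fix z :: complex assume z: "cmod z \<le> r"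
    let ?n = "cmod z ^ 3"
    have n0: "0 \<le> ?n" by simp
    have a: "cmod (z^3 * A z) \<le> ?n * MA"
      using MA z n0 by (simp add: norm_mult norm_power mult_left_mono)
    have b: "cmod (z^2 * cnj z * B z) \<le> ?n * MB"
    proof -
      have "cmod (z^2 * cnj z * B z) = ?n * cmod (B z)" by (simp add: norm_mult norm_power power3_eq_cube power2_eq_square)
      then show ?thesis using MB z n0 by (simp add: mult_left_mono)
    qed
    have c: "cmod (z * (cnj z)^2 * C z) \<le> ?n * MC"
    proof -
      have "cmod (z * (cnj z)^2 * C z) = ?n * cmod (C z)" by (simp add: norm_mult norm_power power3_eq_cube power2_eq_square)
      then show ?thesis using MC z n0 by (simp add: mult_left_mono)
    qed
    have d: "cmod ((cnj z)^3 * D z) \<le> ?n * MD"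
    proof -
      have "cmod ((cnj z)^3 * D z) = ?n * cmod (D z)" by (simp add: norm_mult norm_power)
      then show ?thesis using MD z n0 by (simp add: mult_left_mono)
    qed
    have "cmod (z^3 * A z + z^2 * cnj z * B z + z * (cnj z)^2 * C z + (cnj z)^3 * D z)
      \<le> cmod (z^3 * A z) + cmod (z^2 * cnj z * B z) + cmod (z * (cnj z)^2 * C z) + cmod ((cnj z)^3 * D z)"
      by (smt (verit) norm_triangle_ineq)
    also have "\<dots> \<le> (MA + MB + MC + MD) * ?n" using a b c d by (simp add: algebra_simps)
    finally show "cmod (z^3 * A z + z^2 * cnj z * B z + z * (cnj z)^2 * C z + (cnj z)^3 * D z) \<le> (MA + MB + MC + MD) * ?n" .
  qed
qed

definition Tpol :: "complex \<Rightarrow> complex \<Rightarrow> complex \<Rightarrow> complex \<Rightarrow> complex \<Rightarrow> complex \<Rightarrow> complex \<Rightarrow> complex" where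
  "Tpol c0 c1 c2 c3 c4 c5 z = c0 + c1 * cnj z + c2 * z + c3 * z^2 + c4 * (cnj z)^2 + c5 * z * cnj z"

definition Pfun :: "complex \<Rightarrow> complex \<Rightarrow> complex \<Rightarrow> complex \<Rightarrow> complex" where
  "Pfun c1 n2 n3 w = c1 * cnj w + n2 * complex_of_real ((cmod w)^2) + n3 * (cnj w)^2"

lemma abstract_ident:
  fixes d dd G T Pt PP N Q :: complex
  assumes "d \<noteq> 0" "N = T*d + dd - Pt*d^2" "Q = PP - Pt"
  shows "(G + dd * inverse d) * inverse d - PP = (G - T) * inverse d + N * inverse d^2 - Q"
  unfolding assms(2,3) using assms(1) by (simp add: field_simps power2_eq_square)

lemma E_bound:
  fixes g1 g2 g3 c0 c1 c2 c3 c4 c5 n2 n3 :: complex and C r :: real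
  assumes "2*g1 + c0 = 0" "c2 + 2*g1*c0 + 6*g2 = 0" "12*g3 + c3 + 2*g1*c2 + 3*g2*c0 = 0"
    "n2 = c5 - 2*g1*c1" "n3 = c4 - c1*cnj g1"
    "\<And>z. cmod z \<le> r \<Longrightarrow> cmod (dphi g1 g2 g3 z) \<ge> 1/2"
  shows "\<exists>M. \<forall>z G. cmod z \<le> r \<longrightarrow> cmod (G - Tpol c0 c1 c2 c3 c4 c5 z) \<le> C * cmod z ^ 3 \<longrightarrow>
     cmod ((G + ddphi g1 g2 g3 z * inverse (dphi g1 g2 g3 z)) * inverse (dphi g1 g2 g3 z)
        - Pfun c1 n2 n3 (phiP g1 g2 g3 z)) \<le> M * cmod z ^ 3"
proof -
  let ?d = "dphi g1 g2 g3"
  define AA where "AA z = (- 18*g2^2 - 32*g1*g3 + 48*g1^2*g2 - 16*g1^4 - 4*(cnj z)*g3*c1 - 3*(cnj z)*g2*c5 - 4*(cnj z)*g1^2*c5 + 8*(cnj z)*g1^3*c1 - 4*(cnj z)^2*g3*c4 - 12*(cnj z)^2*g1*g2*c4 - 60*z*g2*g3 + 54*z*g1*g2^2 + 16*z*g1^2*g3 - 24*z*g1^3*g2 - 4*z*(cnj z)*g3*c5 - 9*z*(cnj z)*g2^2*c1 - 12*z*(cnj z)*g1*g2*c5 + 24*z*(cnj z)*g1^2*g2*c1 - 9*z*(cnj z)^2*g2^2*c4 - 16*z*(cnj z)^2*g1*g3*c4 - 48*z^2*g3^2 + 72*z^2*g1*g2*g3 - 32*z^2*g1^3*g3 - 24*z^2*(cnj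 z)*g2*g3*c1 - 9*z^2*(cnj z)*g2^2*c5 - 16*z^2*(cnj z)*g1*g3*c5 + 18*z^2*(cnj z)*g1*g2^2*c1 + 32*z^2*(cnj z)*g1^2*g3*c1 - 24*z^2*(cnj z)^2*g2*g3*c4 - 16*z^3*(cnj z)*g3^2*c1 - 24*z^3*(cnj z)*g2*g3*c5 + 48*z^3*(cnj z)*g1*g2*g3*c1 - 16*z^3*(cnj z)^2*g3^2*c4 - 16*z^4*(cnj z)*g3^2*c5 + 32*z^4*(cnj z)*g1*g3^2*c1) * inverse (?d z)^2" for z
  define BB where "BB z = (- 3*g2*c1 - 2*g1*c5 + 4*g1^2*c1 - 3*(cnj z)*g2*c4 - 4*(cnj z)*g1^2*c4) * inverse (?d z)^2
     - (n2*(g1 + g2*z + g3*z^2) + n2*(cnj z)*(g1 + g2*z + g3*z^2)*(cnj g1 + cnj g2*(cnj z) + cnj g3*(cnj z)^2))" for z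
  define CC where "CC z = (- 2*g1*c4) * inverse (?d z)^2 - n2*(cnj g1 + cnj g2*(cnj z) + cnj g3*(cnj z)^2)" for z
  define DD where "DD z = - (c1*(cnj g2 + cnj g3*(cnj z)) + n3*(2*(cnj g1 + cnj g2*(cnj z) + cnj g3*(cnj z)^2)
      + (cnj z)*(cnj g1 + cnj g2*(cnj z) + cnj g3*(cnj z)^2)^2))" for z
  have dnz: "?d z \<noteq> 0" if "z \<in> cball 0 r" for z
    using assms(6)[of z] that by (auto simp: mem_cball_0)
  have "continuous_on (cball 0 r) AA" "continuous_on (cball 0 r) BB"
    "continuous_on (cball 0 r) CC" "continuous_on (cball 0 r) DD"
    unfolding AA_def[abs_def] BB_def[abs_def] CC_def[abs_def] DD_def[abs_def] dphi_def
    using dnz unfolding dphi_def by (auto intro!: continuous_intros)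
  then obtain M1 where M1: "\<forall>z. cmod z \<le> r \<longrightarrow>
    cmod (z^3 * AA z + z^2 * cnj z * BB z + z * (cnj z)^2 * CC z + (cnj z)^3 * DD z) \<le> M1 * cmod z ^ 3"
    using cubic_bound by blast
  show ?thesis
  proof (intro exI[of _ "M1 + 2 * C"] allI impI)
    fix z G assume z: "cmod z \<le> r" and G: "cmod (G - Tpol c0 c1 c2 c3 c4 c5 z) \<le> C * cmod z ^ 3"
    have dz: "?d z \<noteq> 0" using dnz z by (simp add: mem_cball_0)
    let ?Pt = "c1*(cnj z + cnj g1*(cnj z)^2) + n2*(z*cnj z) + n3*(cnj z)^2"
    have N: "z^3 * (- 18*g2^2 - 32*g1*g3 + 48*g1^2*g2 - 16*g1^4 - 4*(cnj z)*g3*c1 - 3*(cnj z)*g2*c5 - 4*(cnj z)*g1^2*c5 + 8*(cnj z)*g1^3*c1 - 4*(cnj z)^2*g3*c4 - 12*(cnj z)^2*g1*g2*c4 - 60*z*g2*g3 + 54*z*g1*g2^2 + 16*z*g1^2*g3 - 24*z*g1^3*g2 - 4*z*(cnj z)*g3*c5 - 9*z*(cnj z)*g2^2*c1 - 12*z*(cnj z)*g1*g2*c5 + 24*z*(cnj z)*g1^2*g2*c1 - 9*z*(cnj z)^2*g2^2*c4 - 16*z*(cnj z)^2*g1*g3*c4 - 48*z^2*g3^2 + 72*z^2*g1*g2*g3 - 32*z^2*g1^3*g3 - 24*z^2*(cnj z)*g2*g3*c1 - 9*z^2*(cnj z)*g2^2*c5 - 16*z^2*(cnj z)*g1*g3*c5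 + 18*z^2*(cnj z)*g1*g2^2*c1 + 32*z^2*(cnj z)*g1^2*g3*c1 - 24*z^2*(cnj z)^2*g2*g3*c4 - 16*z^3*(cnj z)*g3^2*c1 - 24*z^3*(cnj z)*g2*g3*c5 + 48*z^3*(cnj z)*g1*g2*g3*c1 - 16*z^3*(cnj z)^2*g3^2*c4 - 16*z^4*(cnj z)*g3^2*c5 + 32*z^4*(cnj z)*g1*g3^2*c1) + z^2*(cnj z)*(- 3*g2*c1 - 2*g1*c5 + 4*g1^2*c1 - 3*(cnj z)*g2*c4 - 4*(cnj z)*g1^2*c4) + z*(cnj z)^2*(- 2*g1*c4) = Tpol c0 c1 c2 c3 c4 c5 z * ?d z + ddphi g1 g2 g3 z - ?Pt * (?d z)^2"
      using N_ident[OF assms(1-5), of "cnj z" z] unfolding Tpol_def dphi_def ddphi_def by simp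
    have Q: "z^2*(cnj z)*(n2*(g1 + g2*z + g3*z^2) + n2*(cnj z)*(g1 + g2*z + g3*z^2)*(cnj g1 + cnj g2*(cnj z) + cnj g3*(cnj z)^2))
     + z*(cnj z)^2*(n2*(cnj g1 + cnj g2*(cnj z) + cnj g3*(cnj z)^2))
     + (cnj z)^3*(c1*(cnj g2 + cnj g3*(cnj z)) + n3*(2*(cnj g1 + cnj g2*(cnj z) + cnj g3*(cnj z)^2) + (cnj z)*(cnj g1 + cnj g2*(cnj z) + cnj g3*(cnj z)^2)^2))
     = Pfun c1 n2 n3 (phiP g1 g2 g3 z) - ?Pt"
      using P_ident[of c1 "cnj z" "cnj g1" "cnj g2" "cnj g3" n2 z g1 g2 g3 n3]
      unfolding Pfun_def complex_norm_square phiP_def by simp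
    have eq: "(G + ddphi g1 g2 g3 z * inverse (?d z)) * inverse (?d z) - Pfun c1 n2 n3 (phiP g1 g2 g3 z)
      = (G - Tpol c0 c1 c2 c3 c4 c5 z) * inverse (?d z)
        + (z^3 * AA z + z^2 * cnj z * BB z + z * (cnj z)^2 * CC z + (cnj z)^3 * DD z)"
    proof -
      have "(G + ddphi g1 g2 g3 z * inverse (?d z)) * inverse (?d z) - Pfun c1 n2 n3 (phiP g1 g2 g3 z)
        = (G - Tpol c0 c1 c2 c3 c4 c5 z) * inverse (?d z)
          + (z^3 * (- 18*g2^2 - 32*g1*g3 + 48*g1^2*g2 - 16*g1^4 - 4*(cnj z)*g3*c1 - 3*(cnj z)*g2*c5 - 4*(cnj z)*g1^2*c5 + 8*(cnj z)*g1^3*c1 - 4*(cnj z)^2*g3*c4 - 12*(cnj z)^2*g1*g2*c4 - 60*z*g2*g3 + 54*z*g1*g2^2 + 16*z*g1^2*g3 - 24*z*g1^3*g2 - 4*z*(cnj z)*g3*c5 - 9*z*(cnj z)*g2^2*c1 - 12*z*(cnj z)*g1*g2*c5 + 24*z*(cnj z)*g1^2*g2*c1 - 9*z*(cnj z)^2*g2^2*c4 - 16*z*(cnj z)^2*g1*g3*c4 - 48*z^2*g3^2 + 72*z^2*g1*g2*g3 - 32*z^2*g1^3*g3 - 24*z^2*(cnj z)*g2*g3*c1 - 9*z^2*(cnj z)*g2^2*c5 - 16*z^2*(cnj z)*g1*g3*c5 + 18*z^2*(cnj z)*g1*g2^2*c1 + 32*z^2*(cnj z)*g1^2*g3*c1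 - 24*z^2*(cnj z)^2*g2*g3*c4 - 16*z^3*(cnj z)*g3^2*c1 - 24*z^3*(cnj z)*g2*g3*c5 + 48*z^3*(cnj z)*g1*g2*g3*c1 - 16*z^3*(cnj z)^2*g3^2*c4 - 16*z^4*(cnj z)*g3^2*c5 + 32*z^4*(cnj z)*g1*g3^2*c1) + z^2*(cnj z)*(- 3*g2*c1 - 2*g1*c5 + 4*g1^2*c1 - 3*(cnj z)*g2*c4 - 4*(cnj z)*g1^2*c4) + z*(cnj z)^2*(- 2*g1*c4)) * inverse (?d z)^2
          - (z^2*(cnj z)*(n2*(g1 + g2*z + g3*z^2) + n2*(cnj z)*(g1 + g2*z + g3*z^2)*(cnj g1 + cnj g2*(cnj z) + cnj g3*(cnj z)^2))
     + z*(cnj z)^2*(n2*(cnj g1 + cnj g2*(cnj z) + cnj g3*(cnj z)^2))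
     + (cnj z)^3*(c1*(cnj g2 + cnj g3*(cnj z)) + n3*(2*(cnj g1 + cnj g2*(cnj z) + cnj g3*(cnj z)^2) + (cnj z)*(cnj g1 + cnj g2*(cnj z) + cnj g3*(cnj z)^2)^2)))"
        by (rule abstract_ident[OF dz N Q])
      also have "\<dots> = (G - Tpol c0 c1 c2 c3 c4 c5 z) * inverse (?d z)
        + (z^3 * AA z + z^2 * cnj z * BB z + z * (cnj z)^2 * CC z + (cnj z)^3 * DD z)"
        unfolding AA_def BB_def CC_def DD_def by (simp add: algebra_simps)
      finally show ?thesis .
    qed
    have inv: "cmod (inverse (?d z)) \<le> 2"
    proof -
      have "inverse (cmod (?d z)) \<le> inverse (1/2)"
        using assms(6)[OF z] by (intro le_imp_inverse_le) auto
      then show ?thesis by (simp add: norm_inverse)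
    qed
    have t1: "cmod ((G - Tpol c0 c1 c2 c3 c4 c5 z) * inverse (?d z)) \<le> 2 * C * cmod z ^ 3"
    proof -
      have "cmod ((G - Tpol c0 c1 c2 c3 c4 c5 z) * inverse (?d z)) \<le> cmod (G - Tpol c0 c1 c2 c3 c4 c5 z) * 2"
        unfolding norm_mult using inv by (intro mult_left_mono) auto
      then show ?thesis using G by simp
    qed
    show "cmod ((G + ddphi g1 g2 g3 z * inverse (?d z)) * inverse (?d z) - Pfun c1 n2 n3 (phiP g1 g2 g3 z))
        \<le> (M1 + 2 * C) * cmod z ^ 3"
    proof -
      have m1: "cmod (z^3 * AA z + z^2 * cnj z * BB z + z * (cnj z)^2 * CC z + (cnj z)^3 * DD z) \<le> M1 * cmod z ^ 3"
        using M1 z by blast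
      have e: "(M1 + 2 * C) * cmod z ^ 3 = M1 * cmod z ^ 3 + 2 * C * cmod z ^ 3" by (simp add: algebra_simps)
      show ?thesis
        unfolding eq e using t1 m1 norm_triangle_ineq[of "(G - Tpol c0 c1 c2 c3 c4 c5 z) * inverse (?d z)"
          "z^3 * AA z + z^2 * cnj z * BB z + z * (cnj z)^2 * CC z + (cnj z)^3 * DD z"]
        by linarith
    qed
  qed
qed



lemma circ_alg:
  fixes E Eb a ab s c0 c1 c2 c3 c4 c5 :: complex
  assumes "E * Eb = 1"
  shows "(c0 + c1*(ab + s*Eb) + c2*(a + s*E) + c3*(a + s*E)^2 + c4*(ab + s*Eb)^2 + c5*(a + s*E)*(ab + s*Eb)) * (\<i> * s*E)
    = \<i> * s^2*(c1 + 2*ab*c4 + a*c5) + \<i> * s*(c0 + c1*ab + c2*a + c3*a^2 + c4*ab^2 + c5*(a*ab + s^2))*E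
      + \<i> * s^2*(c2 + 2*a*c3 + c5*ab)*E^2 + \<i> * s^3*c3*E^3 + \<i> * s^3*c4*Eb"
  using assms by algebra

definition Gcirc where
  "Gcirc a s c0 c1 c2 c3 c4 c5 t = \<i> * s^2*(c1 + 2*cnj a*c4 + a*c5)*t
     + s*(c0 + c1*cnj a + c2*a + c3*a^2 + c4*(cnj a)^2 + c5*(a*cnj a + s^2))*exp(\<i> * t)
     + s^2*(c2 + 2*a*c3 + c5*cnj a)*exp(\<i> * t)^2/2 + s^3*c3*exp(\<i> * t)^3/3 - s^3*c4*exp(-(\<i> * t))"

lemma Gcirc_deriv:
  "(Gcirc a s c0 c1 c2 c3 c4 c5 has_field_derivative
     \<i> * s^2*(c1 + 2*cnj a*c4 + a*c5) + \<i> * s*(c0 + c1*cnj a + c2*a + c3*a^2 + c4*(cnj a)^2 + c5*(a*cnj a + s^2))*exp(\<i> * t)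
      + \<i> * s^2*(c2 + 2*a*c3 + c5*cnj a)*exp(\<i> * t)^2 + \<i> * s^3*c3*exp(\<i> * t)^3 + \<i> * s^3*c4*exp(-(\<i> * t))) (at t)"
  unfolding Gcirc_def[abs_def]
  by (auto intro!: derivative_eq_intros simp: algebra_simps power2_eq_square power3_eq_cube)

lemma cnj_circ: "cnj (a + complex_of_real s * exp (\<i> * complex_of_real t)) = cnj a + complex_of_real s * exp (- (\<i> * complex_of_real t))"
  by (simp add: exp_cnj)

lemma exp_circ_inv: "exp (\<i> * complex_of_real t) * exp (- (\<i> * complex_of_real t)) = 1"
  by (simp add: exp_minus)



lemma circle_poly:
  fixes a c0 c1 c2 c3 c4 c5 :: complex and s :: real
  shows "((\<lambda>t. Re (Tpol c0 c1 c2 c3 c4 c5 (a + of_real s * exp (\<i> * of_real t)) * (\<i> * of_real s * exp (\<i> * of_real t))))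
    has_integral Re (\<i> * (of_real s)^2 * (c1 + 2*cnj a*c4 + a*c5) * (2 * of_real pi))) {0..2*pi}"
proof -
  let ?sc = "complex_of_real s"
  let ?G = "\<lambda>t. Gcirc a ?sc c0 c1 c2 c3 c4 c5 (of_real t)"
  have D: "(?G has_vector_derivative (Tpol c0 c1 c2 c3 c4 c5 (a + ?sc * exp (\<i> * of_real t)) * (\<i> * ?sc * exp (\<i> * of_real t)))) (at t within {0..2*pi})" for t
  proof -
    have o: "((\<lambda>x. complex_of_real x) has_vector_derivative 1) (at t)"
      using has_vector_derivative_of_real[OF DERIV_ident[of "at t"]] by simp
    have "((Gcirc a ?sc c0 c1 c2 c3 c4 c5 \<circ> (\<lambda>x. complex_of_real x)) has_vector_derivative
      (1 * (\<i> * ?sc^2*(c1 + 2*cnj a*c4 + a*c5) + \<i> * ?sc*(c0 + c1*cnj a + c2*a + c3*a^2 + c4*(cnj a)^2 + c5*(a*cnj a + ?sc^2))*exp(\<i> * of_real t)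
      + \<i> * ?sc^2*(c2 + 2*a*c3 + c5*cnj a)*exp(\<i> * of_real t)^2 + \<i> * ?sc^3*c3*exp(\<i> * of_real t)^3 + \<i> * ?sc^3*c4*exp(-(\<i> * of_real t))))) (at t)"
      by (rule field_vector_diff_chain_at[OF o Gcirc_deriv])
    moreover have "\<i> * ?sc^2*(c1 + 2*cnj a*c4 + a*c5) + \<i> * ?sc*(c0 + c1*cnj a + c2*a + c3*a^2 + c4*(cnj a)^2 + c5*(a*cnj a + ?sc^2))*exp(\<i> * of_real t)
      + \<i> * ?sc^2*(c2 + 2*a*c3 + c5*cnj a)*exp(\<i> * of_real t)^2 + \<i> * ?sc^3*c3*exp(\<i> * of_real t)^3 + \<i> * ?sc^3*c4*exp(-(\<i> * of_real t))
      = Tpol c0 c1 c2 c3 c4 c5 (a + ?sc * exp (\<i> * of_real t)) * (\<i> * ?sc * exp (\<i> * of_real t))"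
      unfolding Tpol_def cnj_circ
      using circ_alg[OF exp_circ_inv[of t], of c0 c1 "cnj a" ?sc c2 a c3 c4 c5] by (simp add: mult.assoc)
    ultimately show ?thesis by (auto simp: o_def intro: has_vector_derivative_at_within)
  qed
  have I: "((\<lambda>t. Tpol c0 c1 c2 c3 c4 c5 (a + ?sc * exp (\<i> * of_real t)) * (\<i> * ?sc * exp (\<i> * of_real t)))
     has_integral (?G (2*pi) - ?G 0)) {0..2*pi}"
    by (rule fundamental_theorem_of_calculus) (use D in auto)
  have K: "?G (2*pi) - ?G 0 = \<i> * ?sc^2 * (c1 + 2*cnj a*c4 + a*c5) * (2 * of_real pi)"
  proof -
    have e1: "exp (\<i> * complex_of_real (2*pi)) = 1" using exp_two_pi_i by (simp add: mult.commute mult.left_commute)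
    have e2: "exp (- (\<i> * complex_of_real (2*pi))) = 1" unfolding exp_minus e1 by simp
    have e0: "exp (\<i> * complex_of_real 0) = 1" "exp (- (\<i> * complex_of_real 0)) = 1" by simp_all
    show ?thesis unfolding Gcirc_def e1 e2 e0 by (simp add: field_simps)
  qed
  have "((\<lambda>t. Tpol c0 c1 c2 c3 c4 c5 (a + ?sc * exp (\<i> * of_real t)) * (\<i> * ?sc * exp (\<i> * of_real t)))
     has_integral (\<i> * ?sc^2 * (c1 + 2*cnj a*c4 + a*c5) * (2 * of_real pi))) {0..2*pi}"
    using I unfolding K .
  from has_integral_Re[OF this] show ?thesis .
qed

lemma circ_vderiv:
  "((\<lambda>t. a + complex_of_real s * exp (\<i> * complex_of_real t)) has_vector_derivative
      (\<i> * complex_of_real s * exp (\<i> * complex_of_real t))) (at t)"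
proof -
  have o: "((\<lambda>x. complex_of_real x) has_vector_derivative 1) (at t)"
    using has_vector_derivative_of_real[OF DERIV_ident[of "at t"]] by simp
  have g: "((\<lambda>w. a + complex_of_real s * exp (\<i> * w)) has_field_derivative (\<i> * complex_of_real s * exp (\<i> * complex_of_real t))) (at (complex_of_real t))"
    by (auto intro!: derivative_eq_intros)
  show ?thesis using field_vector_diff_chain_at[OF o g] by (simp add: o_def)
qed

lemma circle_h:
  fixes h :: "complex \<Rightarrow> real" and a :: complex and s :: real
  assumes "s \<ge> 0" "\<And>z. z \<in> cball a s \<Longrightarrow> h z > 0 \<and> h differentiable at z"
  shows "((\<lambda>t. Re (Gam h (a + of_real s * exp (\<i> * of_real t)) * (\<i> * of_real s * exp (\<i> * of_real t)))) has_integral 0) {0..2*pi}"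
proof -
  let ?z = "\<lambda>t. a + complex_of_real s * exp (\<i> * complex_of_real t)"
  let ?v = "\<lambda>t. \<i> * complex_of_real s * exp (\<i> * complex_of_real t)"
  have zin: "?z t \<in> cball a s" for t
    using assms(1) by (simp add: dist_norm norm_mult)
  let ?f = "\<lambda>t. - (1/2) * ln (h (?z t))"
  have D: "(?f has_vector_derivative Re (Gam h (?z t) * ?v t)) (at t within {0..2*pi})" for t
  proof -
    have hp: "h (?z t) > 0" and hd: "h differentiable at (?z t)" using assms(2)[OF zin[of t]] by auto
    have dh: "(h has_derivative frechet_derivative h (at (?z t))) (at (?z t))"
      using hd frechet_derivative_works by blast
    have dz: "(?z has_derivative (\<lambda>x. x *\<^sub>R ?v t)) (at t)"
      using circ_vderiv[of a s t] unfolding has_vector_derivative_def .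
    have lin: "linear (frechet_derivative h (at (?z t)))" using dh has_derivative_linear by blast
    have "((\<lambda>t. h (?z t)) has_derivative (\<lambda>x. frechet_derivative h (at (?z t)) (x *\<^sub>R ?v t))) (at t)"
      using diff_chain_at[OF dz dh] by (simp add: o_def)
    moreover have "(\<lambda>x. frechet_derivative h (at (?z t)) (x *\<^sub>R ?v t)) = (\<lambda>x. frechet_derivative h (at (?z t)) (?v t) * x)"
      by (rule ext) (simp add: linear_scale[OF lin])
    ultimately have "((\<lambda>t. h (?z t)) has_real_derivative frechet_derivative h (at (?z t)) (?v t)) (at t)"
      unfolding has_field_derivative_def by simp
    then have "((\<lambda>t. ln (h (?z t))) has_real_derivative inverse (h (?z t)) * frechet_derivative h (at (?z t)) (?v t)) (at t)"
      by (rule DERIV_chain2[where f=ln and g="\<lambda>t. h (?z t)", OF DERIV_ln[OF hp]])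
    then have "(?f has_real_derivative - (1/2) * (inverse (h (?z t)) * frechet_derivative h (at (?z t)) (?v t))) (at t)"
      by (rule DERIV_cmult)
    moreover have "- (1/2) * (inverse (h (?z t)) * frechet_derivative h (at (?z t)) (?v t)) = Re (Gam h (?z t) * ?v t)"
      unfolding Re_Gam[OF hd hp] using hp by (simp add: field_simps)
    ultimately show ?thesis
      by (auto simp: has_real_derivative_iff_has_vector_derivative intro: has_vector_derivative_at_within)
  qed
  have I: "((\<lambda>t. Re (Gam h (?z t) * ?v t)) has_integral (?f (2*pi) - ?f 0)) {0..2*pi}"
    by (rule fundamental_theorem_of_calculus) (use D in auto)
  have zeq: "?z (2*pi) = ?z 0"
  proof -
    have e1: "exp (\<i> * complex_of_real (2*pi)) = 1" using exp_two_pi_i by (simp add: mult.commute mult.left_commute)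
    show ?thesis unfolding e1 by simp
  qed
  have Z: "?f (2*pi) - ?f 0 = 0" by (simp only: zeq)
  show ?thesis using I unfolding Z .
qed

lemma circle_ineq:
  fixes h :: "complex \<Rightarrow> real" and a c0 c1 c2 c3 c4 c5 :: complex and s C :: real
  assumes "s > 0" "C \<ge> 0"
    "\<And>z. z \<in> cball a s \<Longrightarrow> h z > 0 \<and> h differentiable at z \<and>
        cmod (Gam h z - Tpol c0 c1 c2 c3 c4 c5 z) \<le> C * cmod z ^ 3"
  shows "s^2 * \<bar>Im (c1 + 2*cnj a*c4 + a*c5)\<bar> \<le> C * (cmod a + s)^3 * s"
proof -
  let ?z = "\<lambda>t. a + complex_of_real s * exp (\<i> * complex_of_real t)"
  let ?v = "\<lambda>t. \<i> * complex_of_real s * exp (\<i> * complex_of_real t)"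
  let ?X = "c1 + 2*cnj a*c4 + a*c5"
  have zin: "?z t \<in> cball a s" for t
    using assms(1) by (simp add: dist_norm norm_mult)
  have I1: "((\<lambda>t. Re (Gam h (?z t) * ?v t)) has_integral 0) {0..2*pi}"
    using circle_h[of s a h] assms(1,3) by auto
  have I2: "((\<lambda>t. Re (Tpol c0 c1 c2 c3 c4 c5 (?z t) * ?v t)) has_integral Re (\<i> * (of_real s)^2 * ?X * (2 * of_real pi))) {0..2*pi}"
    by (rule circle_poly)
  have I: "((\<lambda>t. Re ((Gam h (?z t) - Tpol c0 c1 c2 c3 c4 c5 (?z t)) * ?v t)) has_integral (0 - Re (\<i> * (of_real s)^2 * ?X * (2 * of_real pi)))) {0..2*pi}"
    using has_integral_diff[OF I1 I2] by (simp add: algebra_simps)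
  have B: "norm (Re ((Gam h (?z t) - Tpol c0 c1 c2 c3 c4 c5 (?z t)) * ?v t)) \<le> C * (cmod a + s)^3 * s" for t
  proof -
    have "norm (Re ((Gam h (?z t) - Tpol c0 c1 c2 c3 c4 c5 (?z t)) * ?v t))
       \<le> cmod ((Gam h (?z t) - Tpol c0 c1 c2 c3 c4 c5 (?z t)) * ?v t)"
      unfolding real_norm_def by (rule abs_Re_le_cmod)
    also have "\<dots> = cmod (Gam h (?z t) - Tpol c0 c1 c2 c3 c4 c5 (?z t)) * s"
      using assms(1) by (simp add: norm_mult)
    also have "\<dots> \<le> C * cmod (?z t) ^ 3 * s"
      using assms(3)[OF zin[of t]] assms(1) by (intro mult_right_mono) auto
    also have "\<dots> \<le> C * (cmod a + s)^3 * s"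
    proof -
      have "cmod (?z t) \<le> cmod a + s"
        using norm_triangle_ineq[of a "complex_of_real s * exp (\<i> * complex_of_real t)"] assms(1)
        by (simp add: norm_mult)
      then have "cmod (?z t) ^ 3 \<le> (cmod a + s)^3" by (intro power_mono) auto
      then show ?thesis using assms(1,2) by (intro mult_right_mono mult_left_mono) auto
    qed
    finally show ?thesis .
  qed
  have "norm (0 - Re (\<i> * (of_real s)^2 * ?X * (2 * of_real pi))) \<le> C * (cmod a + s)^3 * s * Henstock_Kurzweil_Integration.content (cbox 0 (2*pi))"
    using has_integral_bound[of "C * (cmod a + s)^3 * s", OF _ I[unfolded cbox_interval[symmetric]]] B assms
    by auto
  moreover have "Re (\<i> * (of_real s)^2 * ?X * (2 * of_real pi)) = - (s^2 * Im ?X * (2 * pi))"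
    by simp
  ultimately have "s^2 * \<bar>Im ?X\<bar> * (2 * pi) \<le> C * (cmod a + s)^3 * s * (2 * pi)"
    by (simp add: abs_mult)
  then show ?thesis by simp
qed

lemma zero_lemma:
  fixes x K e :: real
  assumes "e > 0" "\<And>t. 0 < t \<Longrightarrow> t < e \<Longrightarrow> \<bar>x\<bar> \<le> K * t"
  shows "x = 0"
proof (rule ccontr)
  assume "x \<noteq> 0"
  then have xp: "\<bar>x\<bar> > 0" by simp
  define t where "t = min (e/2) (\<bar>x\<bar> / (2 * (\<bar>K\<bar> + 1)))"
  have tp: "t > 0" "t < e" unfolding t_def using assms(1) xp by auto
  have "K * t \<le> \<bar>K\<bar> * t" using tp by (intro mult_right_mono) auto
  also have "\<dots> \<le> \<bar>K\<bar> * (\<bar>x\<bar> / (2 * (\<bar>K\<bar> + 1)))"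
    unfolding t_def by (intro mult_left_mono) auto
  also have "\<dots> < \<bar>x\<bar>"
  proof -
    have "\<bar>K\<bar> * (\<bar>x\<bar> / (2 * (\<bar>K\<bar> + 1))) = \<bar>x\<bar> * (\<bar>K\<bar> / (2 * (\<bar>K\<bar> + 1)))" by simp
    also have "\<dots> < \<bar>x\<bar> * 1"
      using xp by (intro mult_strict_left_mono) (auto simp: field_simps)
    finally show ?thesis by simp
  qed
  finally show False using assms(2)[OF tp] by simp
qed

lemma coeff_facts:
  fixes c1 c4 c5 :: complex and C \<epsilon> :: real
  assumes "\<epsilon> > 0" "C \<ge> 0"
    "\<And>a s. s > 0 \<Longrightarrow> cmod a + s < \<epsilon> \<Longrightarrow> s^2 * \<bar>Im (c1 + 2*cnj a*c4 + a*c5)\<bar> \<le> C * (cmod a + s)^3 * s"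
  shows "Im c1 = 0" "c5 = 2 * cnj c4"
proof -
  have "Im c1 = 0"
  proof (rule zero_lemma[of "min \<epsilon> 1" _ C])
    show "min \<epsilon> 1 > 0" using assms(1) by simp
    fix s :: real assume s: "0 < s" "s < min \<epsilon> 1"
    have "s^2 * \<bar>Im c1\<bar> \<le> C * s^3 * s" using assms(3)[of s 0] s by simp
    then have "s^2 * \<bar>Im c1\<bar> \<le> s^2 * (C * s^2)" by (simp add: algebra_simps power2_eq_square power3_eq_cube)
    then have "\<bar>Im c1\<bar> \<le> C * s^2" using s by simp
    also have "\<dots> \<le> C * s" using s assms(2) by (intro mult_left_mono) (auto simp: power2_eq_square)
    finally show "\<bar>Im c1\<bar> \<le> C * s" .
  qed
  then show "Im c1 = 0" .
  note c1 = this
  have key: "\<bar>Im (2*cnj u*c4 + u*c5)\<bar> \<le> 8 * C * t" if u: "cmod u = 1" and t: "0 < t" "t < \<epsilon>/2" for u t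
  proof -
    have "t^2 * \<bar>Im (c1 + 2*cnj (of_real t * u)*c4 + (of_real t * u)*c5)\<bar> \<le> C * (cmod (of_real t * u) + t)^3 * t"
      using assms(3)[of t "of_real t * u"] t u by (simp add: norm_mult)
    moreover have "Im (c1 + 2*cnj (of_real t * u)*c4 + (of_real t * u)*c5) = t * Im (2*cnj u*c4 + u*c5)"
      using c1 by (simp add: algebra_simps)
    moreover have "cmod (of_real t * u) + t = 2 * t" using u t by (simp add: norm_mult)
    ultimately have "t^2 * (t * \<bar>Im (2*cnj u*c4 + u*c5)\<bar>) \<le> C * (2*t)^3 * t" using t by (simp add: abs_mult)
    then have "t^3 * \<bar>Im (2*cnj u*c4 + u*c5)\<bar> \<le> t^3 * (8 * C * t)" by (simp add: algebra_simps power2_eq_square power3_eq_cube)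
    then show ?thesis using t by simp
  qed
  have a1: "Im (2*c4 + c5) = 0"
    using zero_lemma[of "\<epsilon>/2" "Im (2*c4 + c5)" "8 * C"] key[of 1] assms(1) by simp
  have a2: "Im (2*cnj \<i>*c4 + \<i>*c5) = 0"
    using zero_lemma[of "\<epsilon>/2" "Im (2*cnj \<i>*c4 + \<i>*c5)" "8 * C"] key[of \<i>] assms(1) by simp
  show "c5 = 2 * cnj c4"
    using a1 a2 by (simp add: complex_eq_iff)
qed



theorem lemma3p1:
  fixes h :: "complex \<Rightarrow> real" and S :: "complex set"
    and \<Gamma> \<phi> :: "complex \<Rightarrow> complex"
    and c0 c1 c2 c3 c4 c5 \<gamma>1 \<gamma>2 \<gamma>3 \<nu>2 \<nu>3 :: complex
  assumes S: "open S" "0 \<in> S"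
    and h_pos: "\<forall>z\<in>S. h z > 0"
    and h_smooth: "smooth_on S h"
    and Gamma_def: "\<Gamma> = (\<lambda>z. - wirt_z (\<lambda>u. complex_of_real (h u)) z / complex_of_real (h z))"
    and expansion: "\<exists>C \<delta>. \<delta> > 0 \<and> (\<forall>z\<in>S. cmod z < \<delta> \<longrightarrow>
        cmod (\<Gamma> z - (c0 + c1 * cnj z + c2 * z + c3 * z^2 + c4 * (cnj z)^2 + c5 * z * cnj z))
          \<le> C * cmod z ^ 3)"
    and g1: "2 * \<gamma>1 + c0 = 0"
    and g2: "c2 + 2 * \<gamma>1 * c0 + 6 * \<gamma>2 = 0"
    and g3: "12 * \<gamma>3 + c3 + 2 * \<gamma>1 * c2 + 3 * \<gamma>2 * c0 = 0"
    and phi_def: "\<phi> = (\<lambda>z. z + \<gamma>1 * z^2 + \<gamma>2 * z^3 + \<gamma>3 * z^4)"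
    and nu2_def: "\<nu>2 = c5 - 2 * \<gamma>1 * c1"
    and nu3_def: "\<nu>3 = c4 - c1 * cnj \<gamma>1"
  shows "c1 \<in> \<real> \<and> \<nu>2 = 2 * cnj \<nu>3 \<and>
    (\<exists>r>0. \<exists>\<rho>>0. \<exists>R :: complex \<Rightarrow> complex.
       smooth_on (ball 0 \<rho>) R \<and>
       (\<exists>C. \<forall>w\<in>ball 0 \<rho>. cmod (R w) \<le> C * cmod w ^ 3) \<and>
       (\<forall>(U :: (real \<times> real) set) (z :: real \<Rightarrow> real \<Rightarrow> complex) zt zx zxx.
          open U \<and>
          (\<forall>(t, x)\<in>U. cmod (z t x) < r \<and>
             ((\<lambda>s. z s x) has_vector_derivative zt t x) (at t) \<and>
             ((\<lambda>y. z t y) has_vector_derivative zx t x) (at x) \<and>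
             ((\<lambda>y. zx t y) has_vector_derivative zxx t x) (at x) \<and>
             \<i> * zt t x + zxx t x = \<Gamma> (z t x) * (zx t x)^2)
          \<longrightarrow>
          (\<exists>wt wx wxx :: real \<Rightarrow> real \<Rightarrow> complex.
             \<forall>(t, x)\<in>U. cmod (\<phi> (z t x)) < \<rho> \<and>
               ((\<lambda>s. \<phi> (z s x)) has_vector_derivative wt t x) (at t) \<and>
               ((\<lambda>y. \<phi> (z t y)) has_vector_derivative wx t x) (at x) \<and>
               ((\<lambda>y. wx t y) has_vector_derivative wxx t x) (at x) \<and>
               \<i> * wt t x + wxx t x =
                 (c1 * cnj (\<phi> (z t x)) + \<nu>2 * (cmod (\<phi> (z t x)))^2
                  + \<nu>3 * (cnj (\<phi> (z t x)))^2 + R (\<phi> (z t x))) * (wx t x)^2)))"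
proof -
  obtain \<epsilon>0 where e0: "\<epsilon>0 > 0" "ball 0 \<epsilon>0 \<subseteq> S"
    using S open_contains_ball by blast
  obtain C0 \<delta> where Cd: "\<delta> > 0" "\<And>z. z \<in> S \<Longrightarrow> cmod z < \<delta> \<Longrightarrow>
        cmod (\<Gamma> z - (c0 + c1 * cnj z + c2 * z + c3 * z^2 + c4 * (cnj z)^2 + c5 * z * cnj z))
          \<le> C0 * cmod z ^ 3"
    using expansion by blast
  define C where "C = max C0 0"
  have C0: "C \<ge> 0" unfolding C_def by simp
  have hd: "h differentiable at z" if "z \<in> S" for z
  proof -
    have "Ck_on 1 S h" using smooth_onD[OF h_smooth] .
    then have "h differentiable_on S" by simp
    then show ?thesis using S(1) that differentiable_on_eq_differentiable_at by blast
  qed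
  have GG: "\<Gamma> z = Gam h z" if "z \<in> S" for z
    unfolding Gamma_def using Gamma_eq_Gam[OF hd[OF that]] by simp
  have exp2: "cmod (Gam h z - Tpol c0 c1 c2 c3 c4 c5 z) \<le> C * cmod z ^ 3" if "z \<in> S" "cmod z < \<delta>" for z
  proof -
    have "cmod (Gam h z - Tpol c0 c1 c2 c3 c4 c5 z) \<le> C0 * cmod z ^ 3"
      using Cd(2)[OF that] GG[OF that(1)] unfolding Tpol_def by simp
    also have "\<dots> \<le> C * cmod z ^ 3" unfolding C_def by (intro mult_right_mono) auto
    finally show ?thesis .
  qed
  define \<epsilon> where "\<epsilon> = min \<epsilon>0 \<delta>"
  have ep: "\<epsilon> > 0" unfolding \<epsilon>_def using e0 Cd by simp
  have inS: "z \<in> S" "cmod z < \<delta>" if "cmod z < \<epsilon>" for z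
    using that e0(2) unfolding \<epsilon>_def by (auto simp: dist_norm)
  have ineq: "s^2 * \<bar>Im (c1 + 2*cnj a*c4 + a*c5)\<bar> \<le> C * (cmod a + s)^3 * s"
    if "s > 0" "cmod a + s < \<epsilon>" for a s
  proof (rule circle_ineq[OF that(1) C0])
    fix z assume z: "z \<in> cball a s"
    have "cmod z \<le> cmod a + s"
      using z norm_triangle_ineq[of a "z - a"] by (simp add: dist_norm norm_minus_commute)
    then have zz: "cmod z < \<epsilon>" using that by simp
    show "h z > 0 \<and> h differentiable at z \<and> cmod (Gam h z - Tpol c0 c1 c2 c3 c4 c5 z) \<le> C * cmod z ^ 3"
      using h_pos hd exp2 inS[OF zz] by blast
  qed
  have cf: "Im c1 = 0" "c5 = 2 * cnj c4"
    using coeff_facts[OF ep C0 ineq] by blast+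
  have part1: "c1 \<in> \<real>" using cf(1) complex_is_Real_iff by blast
  have part2: "\<nu>2 = 2 * cnj \<nu>3"
    unfolding nu2_def nu3_def using cf by (simp add: complex_eq_iff)
  have phiE: "\<phi> = phiP \<gamma>1 \<gamma>2 \<gamma>3" unfolding phi_def phiP_def by (rule ext) simp
  obtain r0 \<rho> \<psi> where r0: "0 < r0" "r0 \<le> \<epsilon>/2" "r0 \<le> 1" "0 < \<rho>"
    and dl: "\<And>z. cmod z \<le> r0 \<Longrightarrow> cmod (dphi \<gamma>1 \<gamma>2 \<gamma>3 z) \<ge> 1/2"
    and pl: "\<And>z. cmod z \<le> r0 \<Longrightarrow> cmod (phiP \<gamma>1 \<gamma>2 \<gamma>3 z) \<ge> cmod z / 2"
    and psi1: "\<And>w. w \<in> ball 0 \<rho> \<Longrightarrow> \<psi> w \<in> ball 0 r0 \<and> phiP \<gamma>1 \<gamma>2 \<gamma>3 (\<psi> w) = w"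
    and psi2: "\<And>z. z \<in> ball 0 r0 \<Longrightarrow> \<psi> (phiP \<gamma>1 \<gamma>2 \<gamma>3 z) = z"
    and psid: "\<And>w. w \<in> ball 0 \<rho> \<Longrightarrow> (\<psi> has_field_derivative inverse (dphi \<gamma>1 \<gamma>2 \<gamma>3 (\<psi> w))) (at w)"
    and "continuous_on (ball 0 \<rho>) \<psi>"
    using phiP_inverse[OF half_gt_zero[OF ep], of \<gamma>1 \<gamma>2 \<gamma>3] by blast
  have ball_r0: "ball 0 r0 \<subseteq> S"
  proof
    fix z :: complex assume "z \<in> ball 0 r0"
    then have "cmod z < \<epsilon>" using r0 ep by simp
    then show "z \<in> S" using inS by blast
  qed
  have dnz: "dphi \<gamma>1 \<gamma>2 \<gamma>3 z \<noteq> 0" if "cmod z \<le> r0" for z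
    using dl[OF that] by auto
  obtain M where M: "\<forall>z G. cmod z \<le> r0 \<longrightarrow> cmod (G - Tpol c0 c1 c2 c3 c4 c5 z) \<le> C * cmod z ^ 3 \<longrightarrow>
     cmod ((G + ddphi \<gamma>1 \<gamma>2 \<gamma>3 z * inverse (dphi \<gamma>1 \<gamma>2 \<gamma>3 z)) * inverse (dphi \<gamma>1 \<gamma>2 \<gamma>3 z)
        - Pfun c1 \<nu>2 \<nu>3 (phiP \<gamma>1 \<gamma>2 \<gamma>3 z)) \<le> M * cmod z ^ 3"
    using E_bound[OF g1 g2 g3 nu2_def nu3_def dl] by blast
  define R where "R w = Efun h \<gamma>1 \<gamma>2 \<gamma>3 (\<psi> w)
      - (c1 * cnj w + \<nu>2 * complex_of_real ((cmod w)^2) + \<nu>3 * (cnj w)^2)" for w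
  have Rsmooth: "smooth_on (ball 0 \<rho>) R"
    unfolding R_def[abs_def]
    by (rule smooth_R[OF S(1) _ h_smooth ball_r0]) (use h_pos dnz psi1 psid in auto)
  have Rbound: "cmod (R w) \<le> (8 * max M 0) * cmod w ^ 3" if w: "w \<in> ball 0 \<rho>" for w
  proof -
    define z where "z = \<psi> w"
    have z: "z \<in> ball 0 r0" "phiP \<gamma>1 \<gamma>2 \<gamma>3 z = w" using psi1[OF w] unfolding z_def by auto
    have zr: "cmod z \<le> r0" using z by simp
    have zS: "z \<in> S" "cmod z < \<delta>" using inS[of z] z r0 by auto
    have "cmod (R w) = cmod ((Gam h z + ddphi \<gamma>1 \<gamma>2 \<gamma>3 z * inverse (dphi \<gamma>1 \<gamma>2 \<gamma>3 z)) * inverse (dphi \<gamma>1 \<gamma>2 \<gamma>3 z)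
        - Pfun c1 \<nu>2 \<nu>3 (phiP \<gamma>1 \<gamma>2 \<gamma>3 z))"
      unfolding R_def Efun_def Pfun_def z_def[symmetric] z(2) ..
    also have "\<dots> \<le> M * cmod z ^ 3" using M zr exp2[OF zS] by blast
    also have "\<dots> \<le> max M 0 * cmod z ^ 3" by (intro mult_right_mono) auto
    also have "\<dots> \<le> max M 0 * (2 * cmod w) ^ 3"
    proof -
      have "cmod z \<le> 2 * cmod w" using pl[OF zr] z(2) by simp
      then show ?thesis by (intro mult_left_mono power_mono) auto
    qed
    also have "\<dots> = (8 * max M 0) * cmod w ^ 3" by (simp add: power_mult_distrib)
    finally show ?thesis .
  qed
  define K where "K = 1 + (2 * cmod \<gamma>1 + 3 * cmod \<gamma>2 + 4 * cmod \<gamma>3)"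
  have Kp: "K \<ge> 1" unfolding K_def by simp
  define r where "r = min r0 (\<rho> / K)"
  have rp: "r > 0" unfolding r_def using r0 Kp by simp
  have phi_small: "cmod (phiP \<gamma>1 \<gamma>2 \<gamma>3 z) < \<rho>" if "cmod z < r" for z
  proof -
    have z1: "cmod z \<le> 1" using that r0 unfolding r_def by simp
    have "phiP \<gamma>1 \<gamma>2 \<gamma>3 z = (z - 0) * (1 + (\<gamma>1 * (z + 0) + \<gamma>2 * (z^2 + z*0 + 0^2) + \<gamma>3 * (z^3 + z^2*0 + z*0^2 + 0^3)))"
      using phiP_diff[of \<gamma>1 \<gamma>2 \<gamma>3 z 0] by simp
    moreover have "cmod (\<gamma>1 * (z + 0) + \<gamma>2 * (z^2 + z*0 + 0^2) + \<gamma>3 * (z^3 + z^2*0 + z*0^2 + 0^3))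
        \<le> (2 * cmod \<gamma>1 + 3 * cmod \<gamma>2 + 4 * cmod \<gamma>3) * cmod z"
      by (rule bracket_bound) (use z1 in auto)
    ultimately have "cmod (phiP \<gamma>1 \<gamma>2 \<gamma>3 z) \<le> cmod z * (1 + (2 * cmod \<gamma>1 + 3 * cmod \<gamma>2 + 4 * cmod \<gamma>3) * cmod z)"
      using norm_triangle_ineq[of 1 "\<gamma>1 * (z + 0) + \<gamma>2 * (z^2 + z*0 + 0^2) + \<gamma>3 * (z^3 + z^2*0 + z*0^2 + 0^3)"]
      by (simp only: norm_mult diff_zero) (intro mult_left_mono; simp)
    also have "\<dots> \<le> cmod z * K"
      unfolding K_def using z1 by (intro mult_left_mono) (auto intro!: mult_left_le)
    also have "\<dots> < (\<rho> / K) * K"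
      using that Kp unfolding r_def by (intro mult_strict_right_mono) auto
    also have "\<dots> = \<rho>" using Kp by simp
    finally show ?thesis .
  qed
  have part3: "\<exists>R :: complex \<Rightarrow> complex.
       smooth_on (ball 0 \<rho>) R \<and>
       (\<exists>C. \<forall>w\<in>ball 0 \<rho>. cmod (R w) \<le> C * cmod w ^ 3) \<and>
       (\<forall>(U :: (real \<times> real) set) (z :: real \<Rightarrow> real \<Rightarrow> complex) zt zx zxx.
          open U \<and>
          (\<forall>(t, x)\<in>U. cmod (z t x) < r \<and>
             ((\<lambda>s. z s x) has_vector_derivative zt t x) (at t) \<and>
             ((\<lambda>y. z t y) has_vector_derivative zx t x) (at x) \<and>
             ((\<lambda>y. zx t y) has_vector_derivative zxx t x) (at x) \<and>
             \<i> * zt t x + zxx t x = \<Gamma> (z t x) * (zx t x)^2)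
          \<longrightarrow>
          (\<exists>wt wx wxx :: real \<Rightarrow> real \<Rightarrow> complex.
             \<forall>(t, x)\<in>U. cmod (\<phi> (z t x)) < \<rho> \<and>
               ((\<lambda>s. \<phi> (z s x)) has_vector_derivative wt t x) (at t) \<and>
               ((\<lambda>y. \<phi> (z t y)) has_vector_derivative wx t x) (at x) \<and>
               ((\<lambda>y. wx t y) has_vector_derivative wxx t x) (at x) \<and>
               \<i> * wt t x + wxx t x =
                 (c1 * cnj (\<phi> (z t x)) + \<nu>2 * (cmod (\<phi> (z t x)))^2
                  + \<nu>3 * (cnj (\<phi> (z t x)))^2 + R (\<phi> (z t x))) * (wx t x)^2))"
  proof (rule exI[of _ R], intro conjI allI impI)
    show "smooth_on (ball 0 \<rho>) R" by (rule Rsmooth)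
    show "\<exists>C. \<forall>w\<in>ball 0 \<rho>. cmod (R w) \<le> C * cmod w ^ 3" using Rbound by blast
    fix U :: "(real \<times> real) set" and z :: "real \<Rightarrow> real \<Rightarrow> complex" and zt zx zxx
    assume A: "open U \<and>
          (\<forall>(t, x)\<in>U. cmod (z t x) < r \<and>
             ((\<lambda>s. z s x) has_vector_derivative zt t x) (at t) \<and>
             ((\<lambda>y. z t y) has_vector_derivative zx t x) (at x) \<and>
             ((\<lambda>y. zx t y) has_vector_derivative zxx t x) (at x) \<and>
             \<i> * zt t x + zxx t x = \<Gamma> (z t x) * (zx t x)^2)"
    let ?d = "dphi \<gamma>1 \<gamma>2 \<gamma>3" and ?dd = "ddphi \<gamma>1 \<gamma>2 \<gamma>3"
    show "\<exists>wt wx wxx :: real \<Rightarrow> real \<Rightarrow> complex.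
             \<forall>(t, x)\<in>U. cmod (\<phi> (z t x)) < \<rho> \<and>
               ((\<lambda>s. \<phi> (z s x)) has_vector_derivative wt t x) (at t) \<and>
               ((\<lambda>y. \<phi> (z t y)) has_vector_derivative wx t x) (at x) \<and>
               ((\<lambda>y. wx t y) has_vector_derivative wxx t x) (at x) \<and>
               \<i> * wt t x + wxx t x =
                 (c1 * cnj (\<phi> (z t x)) + \<nu>2 * (cmod (\<phi> (z t x)))^2
                  + \<nu>3 * (cnj (\<phi> (z t x)))^2 + R (\<phi> (z t x))) * (wx t x)^2"
    proof (rule exI[of _ "\<lambda>t x. ?d (z t x) * zt t x"], rule exI[of _ "\<lambda>t x. ?d (z t x) * zx t x"],
        rule exI[of _ "\<lambda>t x. ?dd (z t x) * (zx t x)^2 + ?d (z t x) * zxx t x"], intro ballI)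
      fix p assume "p \<in> U"
      then obtain t x where p: "p = (t, x)" "(t, x) \<in> U" by (cases p) auto
      have zr: "cmod (z t x) < r" and Dt: "((\<lambda>s. z s x) has_vector_derivative zt t x) (at t)"
        and Dx: "((\<lambda>y. z t y) has_vector_derivative zx t x) (at x)"
        and Dxx: "((\<lambda>y. zx t y) has_vector_derivative zxx t x) (at x)"
        and eq: "\<i> * zt t x + zxx t x = \<Gamma> (z t x) * (zx t x)^2"
        using A p(2) by auto
      have zr0: "z t x \<in> ball 0 r0" using zr unfolding r_def by simp
      have zS: "z t x \<in> S" using ball_r0 zr0 by blast
      have dz: "?d (z t x) \<noteq> 0" using dnz zr0 by simp
      have c1': "cmod (\<phi> (z t x)) < \<rho>" using phi_small[OF zr] phiE by simp
      have c2': "((\<lambda>s. \<phi> (z s x)) has_vector_derivative ?d (z t x) * zt t x) (at t)"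
        using field_vector_diff_chain_at[OF Dt phiP_deriv] unfolding phiE by (simp add: o_def mult.commute)
      have c3': "((\<lambda>y. \<phi> (z t y)) has_vector_derivative ?d (z t x) * zx t x) (at x)"
        using field_vector_diff_chain_at[OF Dx phiP_deriv] unfolding phiE by (simp add: o_def mult.commute)
      have dd1: "((\<lambda>y. ?d (z t y)) has_vector_derivative zx t x * ?dd (z t x)) (at x)"
        using field_vector_diff_chain_at[OF Dx dphi_deriv] by (simp add: o_def)
      have c4': "((\<lambda>y. ?d (z t y) * zx t y) has_vector_derivative ?dd (z t x) * (zx t x)^2 + ?d (z t x) * zxx t x) (at x)"
        using has_vector_derivative_mult[OF dd1 Dxx] by (simp add: algebra_simps power2_eq_square)
      have Rv: "R (\<phi> (z t x)) = Efun h \<gamma>1 \<gamma>2 \<gamma>3 (z t x)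
          - (c1 * cnj (\<phi> (z t x)) + \<nu>2 * complex_of_real ((cmod (\<phi> (z t x)))^2) + \<nu>3 * (cnj (\<phi> (z t x)))^2)"
        unfolding R_def phiE psi2[OF zr0] ..
      have c5': "\<i> * (?d (z t x) * zt t x) + (?dd (z t x) * (zx t x)^2 + ?d (z t x) * zxx t x) =
                 (c1 * cnj (\<phi> (z t x)) + \<nu>2 * (cmod (\<phi> (z t x)))^2
                  + \<nu>3 * (cnj (\<phi> (z t x)))^2 + R (\<phi> (z t x))) * (?d (z t x) * zx t x)^2"
      proof -
        have "\<i> * (?d (z t x) * zt t x) + (?dd (z t x) * (zx t x)^2 + ?d (z t x) * zxx t x)
          = ?d (z t x) * (\<i> * zt t x + zxx t x) + ?dd (z t x) * (zx t x)^2" by (simp add: algebra_simps)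
        also have "\<dots> = (Gam h (z t x) * ?d (z t x) + ?dd (z t x)) * (zx t x)^2"
          unfolding eq GG[OF zS] by (simp add: algebra_simps)
        also have "\<dots> = Efun h \<gamma>1 \<gamma>2 \<gamma>3 (z t x) * (?d (z t x) * zx t x)^2"
          unfolding Efun_def using dz by (simp add: field_simps power2_eq_square)
        also have "\<dots> = (c1 * cnj (\<phi> (z t x)) + \<nu>2 * (cmod (\<phi> (z t x)))^2
                  + \<nu>3 * (cnj (\<phi> (z t x)))^2 + R (\<phi> (z t x))) * (?d (z t x) * zx t x)^2"
          unfolding Rv by simp
        finally show ?thesis .
      qed
      show "case p of (t, x) \<Rightarrow> cmod (\<phi> (z t x)) < \<rho> \<and>
               ((\<lambda>s. \<phi> (z s x)) has_vector_derivative ?d (z t x) * zt t x) (at t) \<and>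
               ((\<lambda>y. \<phi> (z t y)) has_vector_derivative ?d (z t x) * zx t x) (at x) \<and>
               ((\<lambda>y. ?d (z t y) * zx t y) has_vector_derivative ?dd (z t x) * (zx t x)^2 + ?d (z t x) * zxx t x) (at x) \<and>
               \<i> * (?d (z t x) * zt t x) + (?dd (z t x) * (zx t x)^2 + ?d (z t x) * zxx t x) =
                 (c1 * cnj (\<phi> (z t x)) + \<nu>2 * (cmod (\<phi> (z t x)))^2
                  + \<nu>3 * (cnj (\<phi> (z t x)))^2 + R (\<phi> (z t x))) * (?d (z t x) * zx t x)^2"
        unfolding p(1) using c1' c2' c3' c4' c5' by simp
    qed
  qed
  show ?thesis
    by (intro conjI part1 part2, rule exI[of _ r], rule conjI[OF rp], rule exI[of _ \<rho>], rule conjI[OF r0(4)], rule part3)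
qed

end
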